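(* For $\sigma^2>0$ let $$V(\sigma^2)=\inf\Big\{\sum_{k\in\mathbb Z}k^2x_k^2:\ x\text{ real},\ \sum_kx_k^2=1,\ \sum_kx_kx_{k+1}=\tfrac{1}{\sqrt{1+\sigma^2}}\Big\}$$ (the minimal time spread of a maximally compact sequence with periodic frequency spread $\sigma^2$), and let $\eta_p=\sigma^2V(\sigma^2)$ be the corresponding time-frequency spread. Then for all $\sigma^2>0$, $$\eta_p\ \ge\ \sigma^2\Big(1-\sqrt{\tfrac{\sigma^2}{1+\sigma^2}}\Big).$$ Moreover, there exists $s_0>0$ such that for all $0<\sigma^2\le s_0$, $$\eta_p\ \le\ \frac{\sigma^2}{8}\Big(\frac{\sqrt{1+\sigma^2}}{\sqrt{1+\sigma^2}-1}-\frac12\Big).$$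
   Context: For a unit-norm real sequence centered at time $0$, $\sum_kk^2x_k^2$ is its time spread $\Delta_n^2$, and $\sum_kx_kx_{k+1}=1/\sqrt{1+\sigma^2}$ means its periodic frequency spread $\Delta_{\omega_p}^2=(1-\tau^2)/\tau^2$, $\tau=\sum_kx_kx_{k+1}$, equals $\sigma^2$. *)

theory Defs
  imports "HOL-Analysis.Analysis"
begin

definition admissible :: "real \<Rightarrow> (int \<Rightarrow> real) \<Rightarrow> bool" where
  "admissible s x \<longleftrightarrow>
     ((\<lambda>k. (x k)\<^sup>2) has_sum 1) UNIV \<and>
     ((\<lambda>k. x k * x (k + 1)) has_sum (1 / sqrt (1 + s))) UNIV \<and>
     (\<lambda>k. (real_of_int k)\<^sup>2 * (x k)\<^sup>2) summable_on UNIV"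

definition time_spread :: "(int \<Rightarrow> real) \<Rightarrow> real" where
  "time_spread x = infsum (\<lambda>k. (real_of_int k)\<^sup>2 * (x k)\<^sup>2) UNIV"

definition V :: "real \<Rightarrow> real" where
  "V s = Inf {time_spread x | x. admissible s x}"

definition eta_p :: "real \<Rightarrow> real" where
  "eta_p s = s * V s"

end

theory Submission
  imports Defs
begin

definition binz :: "nat \<Rightarrow> int \<Rightarrow> real" where
  "binz A t = (if 0 \<le> t then real (A choose nat t) else 0)"

lemma binz_neg: "t < 0 \<Longrightarrow> binz A t = 0" by (simp add: binz_def)
lemma binz_big: "t > int A \<Longrightarrow> binz A t = 0" by (simp add: binz_def)

lemma binz_sym: "binz A t = binz A (int A - t)"
proof (cases "0 \<le> t \<and> t \<le> int A")
  case True
  then have "nat (int A - t) = A - nat t" by auto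
  moreover have "nat t \<le> A" using True by auto
  ultimately show ?thesis using True by (simp add: binz_def binomial_symmetric[of "nat t" A])
next
  case False
  then show ?thesis by (auto simp: binz_def)
qed

lemma vand_nat:
  fixes A B r :: nat
  shows "(\<Sum>j\<le>A. real (A choose j) * binz B (int r - int j)) = real ((A + B) choose r)"
proof -
  define M where "M = max A r"
  have "(\<Sum>j\<le>A. real (A choose j) * binz B (int r - int j))
      = (\<Sum>j\<le>M. real (A choose j) * binz B (int r - int j))"
    by (rule sum.mono_neutral_left) (auto simp: M_def)
  also have "\<dots> = (\<Sum>j\<le>r. real (A choose j) * real (B choose (r - j)))"
    by (rule sum.mono_neutral_cong_right) (auto simp: M_def binz_def nat_diff_distrib)
  also have "\<dots> = real (\<Sum>j\<le>r. (A choose j) * (B choose (r - j)))" by simp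
  also have "\<dots> = real ((A + B) choose r)" by (simp only: vandermonde)
  finally show ?thesis .
qed

lemma vand_fin:
  fixes A B :: nat and u v K :: int
  assumes "u \<le> K" "int A - u \<le> K"
  shows "(\<Sum>k\<in>{-K..K}. binz A (u+k) * binz B (v-k)) = binz (A+B) (u+v)"
proof -
  have "(\<Sum>k\<in>{-K..K}. binz A (u+k) * binz B (v-k)) = (\<Sum>k\<in>{-u..int A-u}. binz A (u+k) * binz B (v-k))"
    by (rule sum.mono_neutral_right) (use assms in \<open>auto simp: binz_def\<close>)
  also have "\<dots> = (\<Sum>j\<le>A. real (A choose j) * binz B ((u+v) - int j))"
    by (rule sum.reindex_bij_witness[of _ "\<lambda>j. int j - u" "\<lambda>k. nat (u+k)"])
       (auto simp: binz_def)
  also have "\<dots> = binz (A+B) (u+v)"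
  proof (cases "u+v < 0")
    case True
    then show ?thesis by (simp add: binz_def)
  next
    case False
    then obtain r where r: "u + v = int r" by (metis zero_le_imp_eq_int not_less)
    show ?thesis using vand_nat[of A B r] by (simp add: r binz_def)
  qed
  finally show ?thesis .
qed

definition bb :: "nat \<Rightarrow> int \<Rightarrow> real" where "bb m k = binz (2*m) (int m + k)"
definition ob :: "nat \<Rightarrow> int \<Rightarrow> real" where "ob m k = binz (2*m - 1) (int m + k - 1)"
definition cen :: "nat \<Rightarrow> real" where "cen q = real ((2*q) choose q)"

lemma bb_sym: "bb m k = binz (2*m) (int m - k)"
  unfolding bb_def by (subst binz_sym) (simp add: algebra_simps)

lemma ob_sym: "m \<ge> 1 \<Longrightarrow> ob m k = binz (2*m - 1) (int m - k)"
  unfolding ob_def by (subst binz_sym) (simp add: algebra_simps of_nat_diff)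

lemma cen_Suc_nat: "((2*p+2) choose Suc p) * Suc p = 2 * (2*p+1) * ((2*p) choose p)"
proof -
  have a: "Suc p * ((2*p+2) choose Suc p) = (2*p+2) * ((2*p+1) choose p)"
    using binomial_absorption[of p "2*p+2"] by simp
  have a2: "(2*p+2) choose Suc p = 2 * ((2*p+1) choose p)"
  proof -
    have "Suc p * ((2*p+2) choose Suc p) = Suc p * (2 * ((2*p+1) choose p))"
      using a by simp
    then show ?thesis by (simp only: mult_left_cancel)
  qed
  have b: "Suc p * ((2*p+1) choose Suc p) = (2*p+1) * ((2*p) choose p)"
    using binomial_absorption[of p "2*p+1"] by simp
  have c: "(2*p+1) choose Suc p = (2*p+1) choose p"
    using binomial_symmetric[of p "2*p+1"] by (simp add: Suc_diff_le)
  show ?thesis using a2 b c by (simp add: algebra_simps)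
qed

lemma cen_Suc: "cen (Suc p) * real (Suc p) = 2 * (2 * real p + 1) * cen p"
proof -
  have "2 * Suc p = 2*p+2" by simp
  then have "cen (Suc p) = real ((2*p+2) choose Suc p)" unfolding cen_def by simp
  then show ?thesis using arg_cong[OF cen_Suc_nat[of p], of real] unfolding cen_def
    by (simp add: algebra_simps)
qed

lemma cen_pred_nat: "Suc (Suc p) * ((2*p+2) choose p) = Suc p * ((2*p+2) choose Suc p)"
proof -
  have a: "Suc p * ((2*p+2) choose Suc p) = (2*p+2) * ((2*p+1) choose p)"
    using binomial_absorption[of p "2*p+2"] by simp
  have b: "(2*p+2 - p) * ((2*p+2) choose p) = (2*p+2) * ((2*p+1) choose p)"
    using binomial_absorb_comp[of "2*p+2" p] by simp
  have "2*p+2-p = Suc (Suc p)" by simp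
  with a b show ?thesis by simp
qed

lemma cen_pred: "real (Suc (Suc p)) * real (((2*p+2) choose p)) = real (Suc p) * cen (Suc p)"
proof -
  have "2 * Suc p = 2*p+2" by simp
  then have "cen (Suc p) = real ((2*p+2) choose Suc p)" unfolding cen_def by simp
  moreover have "real (Suc (Suc p) * ((2*p+2) choose p)) = real (Suc p * ((2*p+2) choose Suc p))"
    using cen_pred_nat[of p] by (simp only:)
  ultimately show ?thesis by (simp only: of_nat_mult)
qed

lemma k_bb: assumes "m \<ge> 1" shows "real_of_int k * bb m k = real m * (ob m k - ob m (k+1))"
proof -
  define j where "j = int m + k"
  have e1: "bb m k = binz (2*m) j" and e2: "ob m k = binz (2*m-1) (j - 1)" and e3: "ob m (k+1) = binz (2*m-1) j"
    by (auto simp: bb_def ob_def j_def algebra_simps)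
  have kk: "real_of_int k = real_of_int j - real m" by (simp add: j_def)
  have main: "(real_of_int j - real m) * binz (2*m) j = real m * (binz (2*m-1) (j-1) - binz (2*m-1) j)"
  proof (cases "j < 0")
    case True then show ?thesis by (simp add: binz_def)
  next
    case False
    then obtain J where J: "j = int J" by (metis zero_le_imp_eq_int not_less)
    show ?thesis
    proof (cases J)
      case 0 then show ?thesis using assms by (simp add: J binz_def)
    next
      case (Suc i)
      have a: "Suc i * ((2*m) choose Suc i) = (2*m) * ((2*m-1) choose i)"
        using binomial_absorption[of i "2*m"] .
      have b: "(2*m - Suc i) * ((2*m) choose Suc i) = (2*m) * ((2*m-1) choose Suc i)"
        using binomial_absorb_comp[of "2*m" "Suc i"] .
      have ra: "real (Suc i) * real ((2*m) choose Suc i) = 2 * real m * real ((2*m-1) choose i)"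
        using arg_cong[OF a, of real] by (simp add: algebra_simps)
      show ?thesis
      proof (cases "Suc i \<le> 2*m")
        case True
        have rb: "(2 * real m - real (Suc i)) * real ((2*m) choose Suc i) = 2 * real m * real ((2*m-1) choose Suc i)"
          using arg_cong[OF b, of real] True by (simp add: of_nat_diff)
        have "(real_of_int j - real m) * real ((2*m) choose Suc i) = real m * (real ((2*m-1) choose i) - real ((2*m-1) choose Suc i))"
          using ra rb by (simp add: J Suc algebra_simps)
        moreover have "nat (1 + int i) = Suc i" by simp
        ultimately show ?thesis by (simp add: J Suc binz_def)
      next
        case False
        then have "2*m-1 < i" using assms by auto
        then show ?thesis using False by (simp add: J Suc binz_def binomial_eq_0)
      qed
    qed
  qed
  show ?thesis unfolding e1 e2 e3 kk using main .
qed

lemma gram_S: assumes "int m \<le> K"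
  shows "(\<Sum>k\<in>{-K..K}. bb m k * bb l k) = cen (m+l)"
proof -
  have "(\<Sum>k\<in>{-K..K}. bb m k * bb l k) = (\<Sum>k\<in>{-K..K}. binz (2*m) (int m + k) * binz (2*l) (int l - k))"
    by (rule sum.cong) (simp_all add: bb_def[of m] bb_sym[of l])
  also have "\<dots> = binz (2*m + 2*l) (int m + int l)"
    by (rule vand_fin) (use assms in auto)
  also have "\<dots> = cen (m+l)" by (simp add: binz_def cen_def algebra_simps nat_add_distrib)
  finally show ?thesis .
qed

lemma gram_C: assumes "int m \<le> K" "m + l = Suc p"
  shows "real (Suc (Suc p)) * (\<Sum>k\<in>{-K..K}. bb m k * bb l (k+1)) = real (Suc p) * cen (Suc p)"
proof -
  have "(\<Sum>k\<in>{-K..K}. bb m k * bb l (k+1)) = (\<Sum>k\<in>{-K..K}. binz (2*m) (int m + k) * binz (2*l) ((int l - 1) - k))"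
    by (rule sum.cong) (simp_all add: bb_def[of m] bb_sym[of l] algebra_simps)
  also have "\<dots> = binz (2*m + 2*l) (int m + (int l - 1))"
    by (rule vand_fin) (use assms in auto)
  also have "\<dots> = real ((2*p+2) choose p)"
  proof -
    have h1: "int m + (int l - 1) = int p" using assms(2) by linarith
    have h2: "2*m+2*l = 2*p+2" using assms(2) by linarith
    show ?thesis by (simp only: h1 h2) (simp add: binz_def)
  qed
  finally show ?thesis using cen_pred[of p] by simp
qed

lemma gram_M: assumes "m \<ge> 1" "l \<ge> 1" "int m \<le> K" "int l \<le> K"
  shows "(2 * real (m+l) - 1) * (\<Sum>k\<in>{-K..K}. (real_of_int k)^2 * (bb m k * bb l k))
         = real m * real l * cen (m+l)"
proof -
  define p where "p = m + l - 2"
  have p: "m + l = Suc (Suc p)" using assms unfolding p_def by simp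
  have "(\<Sum>k\<in>{-K..K}. (real_of_int k)^2 * (bb m k * bb l k))
      = (\<Sum>k\<in>{-K..K}. (real m * (ob m k - ob m (k+1))) * (real l * (ob l k - ob l (k+1))))"
  proof (rule sum.cong)
    fix k assume "k \<in> {-K..K}"
    have "(real_of_int k)^2 * (bb m k * bb l k) = (real_of_int k * bb m k) * (real_of_int k * bb l k)"
      by (simp add: power2_eq_square algebra_simps)
    also have "\<dots> = (real m * (ob m k - ob m (k+1))) * (real l * (ob l k - ob l (k+1)))"
      by (simp only: k_bb[OF assms(1)] k_bb[OF assms(2)])
    finally show "(real_of_int k)^2 * (bb m k * bb l k) = (real m * (ob m k - ob m (k+1))) * (real l * (ob l k - ob l (k+1)))" .
  qed simp
  also have "\<dots> = real m * real l * ((\<Sum>k\<in>{-K..K}. ob m k * ob l k) - (\<Sum>k\<in>{-K..K}. ob m k * ob l (k+1))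
        - (\<Sum>k\<in>{-K..K}. ob m (k+1) * ob l k) + (\<Sum>k\<in>{-K..K}. ob m (k+1) * ob l (k+1)))"
  proof -
    have "(\<Sum>k\<in>{-K..K}. (real m * (ob m k - ob m (k+1))) * (real l * (ob l k - ob l (k+1))))
      = (\<Sum>k\<in>{-K..K}. real m * real l * (ob m k * ob l k - ob m k * ob l (k+1) - ob m (k+1) * ob l k + ob m (k+1) * ob l (k+1)))"
      by (rule sum.cong) (simp_all add: algebra_simps)
    also have "\<dots> = real m * real l * ((\<Sum>k\<in>{-K..K}. ob m k * ob l k) - (\<Sum>k\<in>{-K..K}. ob m k * ob l (k+1))
        - (\<Sum>k\<in>{-K..K}. ob m (k+1) * ob l k) + (\<Sum>k\<in>{-K..K}. ob m (k+1) * ob l (k+1)))"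
      by (simp only: sum_distrib_left[symmetric] sum.distrib sum_subtractf)
    finally show ?thesis .
  qed
  also have "(\<Sum>k\<in>{-K..K}. ob m k * ob l k) = binz (2*m-1 + (2*l-1)) ((int m - 1) + int l)"
  proof -
    have "(\<Sum>k\<in>{-K..K}. ob m k * ob l k) = (\<Sum>k\<in>{-K..K}. binz (2*m-1) ((int m - 1) + k) * binz (2*l-1) (int l - k))"
      by (rule sum.cong) (simp_all add: ob_def[of m] ob_sym[OF assms(2)] algebra_simps)
    also have "\<dots> = binz (2*m-1 + (2*l-1)) ((int m - 1) + int l)" by (rule vand_fin) (use assms in auto)
    finally show ?thesis .
  qed
  also have "(\<Sum>k\<in>{-K..K}. ob m k * ob l (k+1)) = binz (2*m-1 + (2*l-1)) ((int m - 1) + (int l - 1))"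
  proof -
    have "(\<Sum>k\<in>{-K..K}. ob m k * ob l (k+1)) = (\<Sum>k\<in>{-K..K}. binz (2*m-1) ((int m - 1) + k) * binz (2*l-1) ((int l - 1) - k))"
      by (rule sum.cong) (simp_all add: ob_def[of m] ob_sym[OF assms(2)] algebra_simps)
    also have "\<dots> = binz (2*m-1 + (2*l-1)) ((int m - 1) + (int l - 1))" by (rule vand_fin) (use assms in auto)
    finally show ?thesis .
  qed
  also have "(\<Sum>k\<in>{-K..K}. ob m (k+1) * ob l k) = binz (2*m-1 + (2*l-1)) (int m + int l)"
  proof -
    have "(\<Sum>k\<in>{-K..K}. ob m (k+1) * ob l k) = (\<Sum>k\<in>{-K..K}. binz (2*m-1) (int m + k) * binz (2*l-1) (int l - k))"
      by (rule sum.cong) (simp_all add: ob_def[of m] ob_sym[OF assms(2)] algebra_simps)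
    also have "\<dots> = binz (2*m-1 + (2*l-1)) (int m + int l)" by (rule vand_fin) (use assms in auto)
    finally show ?thesis .
  qed
  also have "(\<Sum>k\<in>{-K..K}. ob m (k+1) * ob l (k+1)) = binz (2*m-1 + (2*l-1)) (int m + (int l - 1))"
  proof -
    have "(\<Sum>k\<in>{-K..K}. ob m (k+1) * ob l (k+1)) = (\<Sum>k\<in>{-K..K}. binz (2*m-1) (int m + k) * binz (2*l-1) ((int l - 1) - k))"
      by (rule sum.cong) (simp_all add: ob_def[of m] ob_sym[OF assms(2)] algebra_simps)
    also have "\<dots> = binz (2*m-1 + (2*l-1)) (int m + (int l - 1))" by (rule vand_fin) (use assms in auto)
    finally show ?thesis .
  qed
  finally have E: "(\<Sum>k\<in>{-K..K}. (real_of_int k)^2 * (bb m k * bb l k)) = real m * real l *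
     (binz (2*p+2) (int p + 1) - binz (2*p+2) (int p) - binz (2*p+2) (int p + 2) + binz (2*p+2) (int p + 1))"
  proof -
    have h1: "2*m-1 + (2*l-1) = 2*p+2" using p assms by linarith
    have h2: "(int m - 1) + int l = int p + 1" "(int m - 1) + (int l - 1) = int p" "int m + int l = int p + 2"
      "int m + (int l - 1) = int p + 1" using p by linarith+
    assume "(\<Sum>k\<in>{-K..K}. (real_of_int k)^2 * (bb m k * bb l k)) = real m * real l *
     (binz (2 * m - 1 + (2 * l - 1)) (int m - 1 + int l) - binz (2 * m - 1 + (2 * l - 1)) (int m - 1 + (int l - 1)) -
      binz (2 * m - 1 + (2 * l - 1)) (int m + int l) + binz (2 * m - 1 + (2 * l - 1)) (int m + (int l - 1)))"
    then show ?thesis unfolding h1 h2 .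
  qed
  have s: "binz (2*p+2) (int p + 2) = binz (2*p+2) (int p)"
    by (subst binz_sym) (simp add: algebra_simps)
  have c1: "binz (2*p+2) (int p + 1) = cen (Suc p)"
  proof -
    have "nat (int p + 1) = Suc p" by simp
    moreover have "2 * Suc p = 2*p+2" by simp
    ultimately show ?thesis unfolding binz_def cen_def by simp
  qed
  have c0: "binz (2*p+2) (int p) = real ((2*p+2) choose p)" by (simp add: binz_def)
  have E2: "(\<Sum>k\<in>{-K..K}. (real_of_int k)^2 * (bb m k * bb l k)) = real m * real l * (2 * cen (Suc p) - 2 * real ((2*p+2) choose p))"
    using E unfolding s c1 c0 by simp
  have P1: "real (Suc (Suc p)) * real ((2*p+2) choose p) = real (Suc p) * cen (Suc p)" by (rule cen_pred)
  have P2: "cen (Suc (Suc p)) * real (Suc (Suc p)) = 2 * (2 * real (Suc p) + 1) * cen (Suc p)" by (rule cen_Suc)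
  have "(2 * real (m+l) - 1) * (real m * real l * (2 * cen (Suc p) - 2 * real ((2*p+2) choose p)))
        = real m * real l * cen (m+l)"
  proof -
    have q: "real (m+l) = real p + 2" using p by simp
    have "(2 * (real p + 2) - 1) * (2 * cen (Suc p) - 2 * real ((2*p+2) choose p)) * (real p + 2)
          = cen (Suc (Suc p)) * (real p + 2)"
      using P1 P2 by (simp add: algebra_simps)
    then have "(2 * (real p + 2) - 1) * (2 * cen (Suc p) - 2 * real ((2*p+2) choose p)) = cen (Suc (Suc p))"
      by (simp add: mult_right_cancel)
    then show ?thesis unfolding q p by (simp add: algebra_simps)
  qed
  then show ?thesis using E2 by simp
qed

definition Sr :: "real \<Rightarrow> real \<Rightarrow> real" where
  "Sr n b = (- 30720 - 30720*b - 11520*b^2 - 23168*n + 39232*n*b + 28032*n*b^2 + 344243*n^2 + 257568*n^2*b + 62976*n^2*b^2 + 780898*n^3 + 278464*n^3*b + 35328*n^3*b^2 + 653384*n^4 + 114432*n^4*b + 6144*n^4*b^2 + 240640*n^5 + 16384*n^5*b + 32768*n^6)"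

definition Cr :: "real \<Rightarrow> real \<Rightarrow> real" where
  "Cr n b = (15360*b + 7680*b^2 - 57600*n - 64496*n*b - 31488*n*b^2 + 72740*n^2 - 24576*n^2*b - 2304*n^2*b^2 + 482334*n^3 + 123712*n^3*b + 19968*n^3*b^2 + 535112*n^4 + 89856*n^4*b + 6144*n^4*b^2 + 224256*n^5 + 16384*n^5*b + 32768*n^6)"

definition Mr :: "real \<Rightarrow> real \<Rightarrow> real" where
  "Mr n b = (- 3840*b^2 + 28800*n*b + 17024*n*b^2 + 41940*n^2 + 60800*n^2*b + 59904*n^2*b^2 + 143036*n^3 + 13152*n^3*b + 60032*n^3*b^2 + 214509*n^4 - 35104*n^4*b + 24576*n^4*b^2 + 162242*n^5 - 23232*n^5*b + 3584*n^5*b^2 + 59136*n^6 - 4096*n^6*b + 8192*n^7)"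

definition xf :: "nat \<Rightarrow> real \<Rightarrow> int \<Rightarrow> real" where
  "xf n b k = (64 + 64*b + 16*real n) * bb n k + (-16*b - 8*real n) * bb (n+1) k + real n * bb (n+2) k"

lemma bil3w:
  fixes w uu0 uu1 uu2 vv0 vv1 vv2 :: "int \<Rightarrow> real" and a0 a1 a2 :: real
  shows   "(\<Sum>k\<in>I. w k  *  ((a0 * uu0 k + a1 * uu1 k + a2 * uu2 k)  *  (a0 * vv0 k + a1 * vv1 k + a2 * vv2 k))) =
     a0 * a0 * (\<Sum>k\<in>I. w k * (uu0 k * vv0 k)) + a0 * a1 * (\<Sum>k\<in>I. w k * (uu0 k * vv1 k)) + a0 * a2 * (\<Sum>k\<in>I. w k * (uu0 k * vv2 k))
   + a1 * a0 * (\<Sum>k\<in>I. w k * (uu1 k * vv0 k)) + a1 * a1 * (\<Sum>k\<in>I. w k * (uu1 k * vv1 k)) + a1 * a2 * (\<Sum>k\<in>I. w k * (uu1 k * vv2 k))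
   + a2 * a0 * (\<Sum>k\<in>I. w k * (uu2 k * vv0 k)) + a2 * a1 * (\<Sum>k\<in>I. w k * (uu2 k * vv1 k)) + a2 * a2 * (\<Sum>k\<in>I. w k * (uu2 k * vv2 k))"
  by (simp add: sum.distrib sum_distrib_left algebra_simps)

lemma cen_step: "cen (m+1) * (real m + 1) = 2 * (2 * real m + 1) * cen m"
  using cen_Suc[of m] by (simp add: add.commute)

lemma gS: assumes "i \<le> 2" shows "(\<Sum>k\<in>{-(int n+3)..int n+3}. bb (n+i) k * bb (n+j) k) = cen (2*n+i+j)"
proof -
  have "(\<Sum>k\<in>{-(int n+3)..int n+3}. bb (n+i) k * bb (n+j) k) = cen ((n+i)+(n+j))"
    by (rule gram_S) (use assms in auto)
  also have "(n+i)+(n+j) = 2*n+i+j" by simp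
  finally show ?thesis .
qed

lemma gC: assumes "i \<le> 2" "n \<ge> 1" shows "(real (2*n+i+j) + 1) * (\<Sum>k\<in>{-(int n+3)..int n+3}. bb (n+i) k * bb (n+j) (k+1)) = real (2*n+i+j) * cen (2*n+i+j)"
proof -
  define p where "p = 2*n+i+j-1"
  have p: "(n+i)+(n+j) = Suc p" "2*n+i+j = Suc p" using assms unfolding p_def by auto
  have "real (Suc (Suc p)) * (\<Sum>k\<in>{-(int n+3)..int n+3}. bb (n+i) k * bb (n+j) (k+1)) = real (Suc p) * cen (Suc p)"
    by (rule gram_C) (use assms p in auto)
  then show ?thesis unfolding p by simp
qed

lemma gM: assumes "i \<le> 2" "j \<le> 2" "n \<ge> 1" shows "(2 * real (2*n+i+j) - 1) * (\<Sum>k\<in>{-(int n+3)..int n+3}. (real_of_int k)^2 * (bb (n+i) k * bb (n+j) k)) = real (n+i) * real (n+j) * cen (2*n+i+j)"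
proof -
  have "(2 * real ((n+i)+(n+j)) - 1) * (\<Sum>k\<in>{-(int n+3)..int n+3}. (real_of_int k)^2 * (bb (n+i) k * bb (n+j) k)) = real (n+i) * real (n+j) * cen ((n+i)+(n+j))"
    by (rule gram_M) (use assms in auto)
  also have "(n+i)+(n+j) = 2*n+i+j" by simp
  finally show ?thesis .
qed

definition Den :: "real \<Rightarrow> real" where
  "Den n = (2*n+1)*(2*n+2)*(2*n+3)*(2*n+4)*(2*n+5)*(4*n-1)"

lemma cen_vals:
  fixes n :: nat
  defines "r \<equiv> real n"
  shows "cen (2*n+1) = cen (2*n) * (2*(4*r+1)/(2*r+1))"
    "cen (2*n+2) = cen (2*n) * (2*(4*r+1)/(2*r+1)) * (2*(4*r+3)/(2*r+2))"
    "cen (2*n+3) = cen (2*n) * (2*(4*r+1)/(2*r+1)) * (2*(4*r+3)/(2*r+2)) * (2*(4*r+5)/(2*r+3))"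
    "cen (2*n+4) = cen (2*n) * (2*(4*r+1)/(2*r+1)) * (2*(4*r+3)/(2*r+2)) * (2*(4*r+5)/(2*r+3)) * (2*(4*r+7)/(2*r+4))"
proof -
  have s: "\<And>d. cen (2*n+d+1) = cen (2*n+d) * (2*(2*(2*r+real d)+1)/(2*r+real d+1))"
  proof -
    fix d
    have "cen (2*n+d+1) * (real (2*n+d) + 1) = 2 * (2 * real (2*n+d) + 1) * cen (2*n+d)" by (rule cen_step)
    moreover have "real (2*n+d) + 1 > 0" by simp
    ultimately show "cen (2*n+d+1) = cen (2*n+d) * (2*(2*(2*r+real d)+1)/(2*r+real d+1))"
      unfolding r_def by (simp add: field_simps)
  qed
  have e: "2*n+0 = 2*n" "2*n+0+1 = 2*n+1" "2*n+1+1 = 2*n+2" "2*n+2+1 = 2*n+3" "2*n+3+1 = 2*n+4" by simp_all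
  have s1: "cen (2*n+1) = cen (2*n) * (2*(4*r+1)/(2*r+1))" using s[of 0] unfolding e by (simp add: algebra_simps)
  have s2: "cen (2*n+2) = cen (2*n+1) * (2*(4*r+3)/(2*r+2))" using s[of 1] unfolding e by (simp add: algebra_simps)
  have s3: "cen (2*n+3) = cen (2*n+2) * (2*(4*r+5)/(2*r+3))" using s[of 2] unfolding e by (simp add: algebra_simps)
  have s4: "cen (2*n+4) = cen (2*n+3) * (2*(4*r+7)/(2*r+4))" using s[of 3] unfolding e by (simp add: algebra_simps)
  show "cen (2*n+1) = cen (2*n) * (2*(4*r+1)/(2*r+1))" by (rule s1)
  show "cen (2*n+2) = cen (2*n) * (2*(4*r+1)/(2*r+1)) * (2*(4*r+3)/(2*r+2))" using s1 s2 by simp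
  show "cen (2*n+3) = cen (2*n) * (2*(4*r+1)/(2*r+1)) * (2*(4*r+3)/(2*r+2)) * (2*(4*r+5)/(2*r+3))" using s1 s2 s3 by simp
  show "cen (2*n+4) = cen (2*n) * (2*(4*r+1)/(2*r+1)) * (2*(4*r+3)/(2*r+2)) * (2*(4*r+5)/(2*r+3)) * (2*(4*r+7)/(2*r+4))" using s1 s2 s3 s4 by simp
qed

lemma S00: "(\<Sum>k\<in>{-(int n+3)..int n+3}. 1 * (bb n k * bb n k)) = cen (2*n)"
proof -
  have e: "2*n+0+0 = 2*n+0" "n+0 = n" by simp_all
  show ?thesis using gS[of 0 n 0] unfolding e by simp
qed

lemma C00: assumes "n \<ge> 1" shows "(\<Sum>k\<in>{-(int n+3)..int n+3}. 1 * (bb n k * bb n (k+1))) = (2*real n+0) * cen (2*n) / ((2*real n+0) + 1)"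
proof -
  have e: "2*n+0+0 = 2*n+0" "n+0 = n" by simp_all
  show ?thesis using gC[of 0 n 0] assms unfolding e by (simp add: field_simps)
qed

lemma M00: assumes "n \<ge> 1" shows "(\<Sum>k\<in>{-(int n+3)..int n+3}. (real_of_int k)^2 * (bb n k * bb n k)) = (real n + 0) * (real n + 0) * cen (2*n) / (2 * (2*real n+0) - 1)"
proof -
  have e: "2*n+0+0 = 2*n+0" "n+0 = n" by simp_all
  show ?thesis using gM[of 0 0 n] assms unfolding e by (simp add: field_simps)
qed

lemma S01: "(\<Sum>k\<in>{-(int n+3)..int n+3}. 1 * (bb n k * bb (n+1) k)) = cen (2*n+1)"
proof -
  have e: "2*n+0+1 = 2*n+1" "n+0 = n" by simp_all
  show ?thesis using gS[of 0 n 1] unfolding e by simp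
qed

lemma C01: assumes "n \<ge> 1" shows "(\<Sum>k\<in>{-(int n+3)..int n+3}. 1 * (bb n k * bb (n+1) (k+1))) = (2*real n+1) * cen (2*n+1) / ((2*real n+1) + 1)"
proof -
  have e: "2*n+0+1 = 2*n+1" "n+0 = n" by simp_all
  show ?thesis using gC[of 0 n 1] assms unfolding e by (simp add: field_simps)
qed

lemma M01: assumes "n \<ge> 1" shows "(\<Sum>k\<in>{-(int n+3)..int n+3}. (real_of_int k)^2 * (bb n k * bb (n+1) k)) = (real n + 0) * (real n + 1) * cen (2*n+1) / (2 * (2*real n+1) - 1)"
proof -
  have e: "2*n+0+1 = 2*n+1" "n+0 = n" by simp_all
  show ?thesis using gM[of 0 1 n] assms unfolding e by (simp add: field_simps)
qed

lemma S02: "(\<Sum>k\<in>{-(int n+3)..int n+3}. 1 * (bb n k * bb (n+2) k)) = cen (2*n+2)"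
proof -
  have e: "2*n+0+2 = 2*n+2" "n+0 = n" by simp_all
  show ?thesis using gS[of 0 n 2] unfolding e by simp
qed

lemma C02: assumes "n \<ge> 1" shows "(\<Sum>k\<in>{-(int n+3)..int n+3}. 1 * (bb n k * bb (n+2) (k+1))) = (2*real n+2) * cen (2*n+2) / ((2*real n+2) + 1)"
proof -
  have e: "2*n+0+2 = 2*n+2" "n+0 = n" by simp_all
  show ?thesis using gC[of 0 n 2] assms unfolding e by (simp add: field_simps)
qed

lemma M02: assumes "n \<ge> 1" shows "(\<Sum>k\<in>{-(int n+3)..int n+3}. (real_of_int k)^2 * (bb n k * bb (n+2) k)) = (real n + 0) * (real n + 2) * cen (2*n+2) / (2 * (2*real n+2) - 1)"
proof -
  have e: "2*n+0+2 = 2*n+2" "n+0 = n" by simp_all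
  show ?thesis using gM[of 0 2 n] assms unfolding e by (simp add: field_simps)
qed

lemma S10: "(\<Sum>k\<in>{-(int n+3)..int n+3}. 1 * (bb (n+1) k * bb n k)) = cen (2*n+1)"
proof -
  have e: "2*n+1+0 = 2*n+1" "n+0 = n" by simp_all
  show ?thesis using gS[of 1 n 0] unfolding e by simp
qed

lemma C10: assumes "n \<ge> 1" shows "(\<Sum>k\<in>{-(int n+3)..int n+3}. 1 * (bb (n+1) k * bb n (k+1))) = (2*real n+1) * cen (2*n+1) / ((2*real n+1) + 1)"
proof -
  have e: "2*n+1+0 = 2*n+1" "n+0 = n" by simp_all
  show ?thesis using gC[of 1 n 0] assms unfolding e by (simp add: field_simps)
qed

lemma M10: assumes "n \<ge> 1" shows "(\<Sum>k\<in>{-(int n+3)..int n+3}. (real_of_int k)^2 * (bb (n+1) k * bb n k)) = (real n + 1) * (real n + 0) * cen (2*n+1) / (2 * (2*real n+1) - 1)"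
proof -
  have e: "2*n+1+0 = 2*n+1" "n+0 = n" by simp_all
  show ?thesis using gM[of 1 0 n] assms unfolding e by (simp add: field_simps)
qed

lemma S11: "(\<Sum>k\<in>{-(int n+3)..int n+3}. 1 * (bb (n+1) k * bb (n+1) k)) = cen (2*n+2)"
proof -
  have e: "2*n+1+1 = 2*n+2" "n+0 = n" by simp_all
  show ?thesis using gS[of 1 n 1] unfolding e by simp
qed

lemma C11: assumes "n \<ge> 1" shows "(\<Sum>k\<in>{-(int n+3)..int n+3}. 1 * (bb (n+1) k * bb (n+1) (k+1))) = (2*real n+2) * cen (2*n+2) / ((2*real n+2) + 1)"
proof -
  have e: "2*n+1+1 = 2*n+2" "n+0 = n" by simp_all
  show ?thesis using gC[of 1 n 1] assms unfolding e by (simp add: field_simps)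
qed

lemma M11: assumes "n \<ge> 1" shows "(\<Sum>k\<in>{-(int n+3)..int n+3}. (real_of_int k)^2 * (bb (n+1) k * bb (n+1) k)) = (real n + 1) * (real n + 1) * cen (2*n+2) / (2 * (2*real n+2) - 1)"
proof -
  have e: "2*n+1+1 = 2*n+2" "n+0 = n" by simp_all
  show ?thesis using gM[of 1 1 n] assms unfolding e by (simp add: field_simps)
qed

lemma S12: "(\<Sum>k\<in>{-(int n+3)..int n+3}. 1 * (bb (n+1) k * bb (n+2) k)) = cen (2*n+3)"
proof -
  have e: "2*n+1+2 = 2*n+3" "n+0 = n" by simp_all
  show ?thesis using gS[of 1 n 2] unfolding e by simp
qed

lemma C12: assumes "n \<ge> 1" shows "(\<Sum>k\<in>{-(int n+3)..int n+3}. 1 * (bb (n+1) k * bb (n+2) (k+1))) = (2*real n+3) * cen (2*n+3) / ((2*real n+3) + 1)"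
proof -
  have e: "2*n+1+2 = 2*n+3" "n+0 = n" by simp_all
  show ?thesis using gC[of 1 n 2] assms unfolding e by (simp add: field_simps)
qed

lemma M12: assumes "n \<ge> 1" shows "(\<Sum>k\<in>{-(int n+3)..int n+3}. (real_of_int k)^2 * (bb (n+1) k * bb (n+2) k)) = (real n + 1) * (real n + 2) * cen (2*n+3) / (2 * (2*real n+3) - 1)"
proof -
  have e: "2*n+1+2 = 2*n+3" "n+0 = n" by simp_all
  show ?thesis using gM[of 1 2 n] assms unfolding e by (simp add: field_simps)
qed

lemma S20: "(\<Sum>k\<in>{-(int n+3)..int n+3}. 1 * (bb (n+2) k * bb n k)) = cen (2*n+2)"
proof -
  have e: "2*n+2+0 = 2*n+2" "n+0 = n" by simp_all
  show ?thesis using gS[of 2 n 0] unfolding e by simp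
qed

lemma C20: assumes "n \<ge> 1" shows "(\<Sum>k\<in>{-(int n+3)..int n+3}. 1 * (bb (n+2) k * bb n (k+1))) = (2*real n+2) * cen (2*n+2) / ((2*real n+2) + 1)"
proof -
  have e: "2*n+2+0 = 2*n+2" "n+0 = n" by simp_all
  show ?thesis using gC[of 2 n 0] assms unfolding e by (simp add: field_simps)
qed

lemma M20: assumes "n \<ge> 1" shows "(\<Sum>k\<in>{-(int n+3)..int n+3}. (real_of_int k)^2 * (bb (n+2) k * bb n k)) = (real n + 2) * (real n + 0) * cen (2*n+2) / (2 * (2*real n+2) - 1)"
proof -
  have e: "2*n+2+0 = 2*n+2" "n+0 = n" by simp_all
  show ?thesis using gM[of 2 0 n] assms unfolding e by (simp add: field_simps)
qed

lemma S21: "(\<Sum>k\<in>{-(int n+3)..int n+3}. 1 * (bb (n+2) k * bb (n+1) k)) = cen (2*n+3)"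
proof -
  have e: "2*n+2+1 = 2*n+3" "n+0 = n" by simp_all
  show ?thesis using gS[of 2 n 1] unfolding e by simp
qed

lemma C21: assumes "n \<ge> 1" shows "(\<Sum>k\<in>{-(int n+3)..int n+3}. 1 * (bb (n+2) k * bb (n+1) (k+1))) = (2*real n+3) * cen (2*n+3) / ((2*real n+3) + 1)"
proof -
  have e: "2*n+2+1 = 2*n+3" "n+0 = n" by simp_all
  show ?thesis using gC[of 2 n 1] assms unfolding e by (simp add: field_simps)
qed

lemma M21: assumes "n \<ge> 1" shows "(\<Sum>k\<in>{-(int n+3)..int n+3}. (real_of_int k)^2 * (bb (n+2) k * bb (n+1) k)) = (real n + 2) * (real n + 1) * cen (2*n+3) / (2 * (2*real n+3) - 1)"
proof -
  have e: "2*n+2+1 = 2*n+3" "n+0 = n" by simp_all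
  show ?thesis using gM[of 2 1 n] assms unfolding e by (simp add: field_simps)
qed

lemma S22: "(\<Sum>k\<in>{-(int n+3)..int n+3}. 1 * (bb (n+2) k * bb (n+2) k)) = cen (2*n+4)"
proof -
  have e: "2*n+2+2 = 2*n+4" "n+0 = n" by simp_all
  show ?thesis using gS[of 2 n 2] unfolding e by simp
qed

lemma C22: assumes "n \<ge> 1" shows "(\<Sum>k\<in>{-(int n+3)..int n+3}. 1 * (bb (n+2) k * bb (n+2) (k+1))) = (2*real n+4) * cen (2*n+4) / ((2*real n+4) + 1)"
proof -
  have e: "2*n+2+2 = 2*n+4" "n+0 = n" by simp_all
  show ?thesis using gC[of 2 n 2] assms unfolding e by (simp add: field_simps)
qed

lemma M22: assumes "n \<ge> 1" shows "(\<Sum>k\<in>{-(int n+3)..int n+3}. (real_of_int k)^2 * (bb (n+2) k * bb (n+2) k)) = (real n + 2) * (real n + 2) * cen (2*n+4) / (2 * (2*real n+4) - 1)"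
proof -
  have e: "2*n+2+2 = 2*n+4" "n+0 = n" by simp_all
  show ?thesis using gM[of 2 2 n] assms unfolding e by (simp add: field_simps)
qed

lemma algS2:
  fixes r b ca cb cc cd ce Caa Cab Cac Cba Cbb Cbc Cca Ccb Ccc Maa Mab Mac Mba Mbb Mbc Mca Mcb Mcc :: real
  assumes "(2*r+1)*cb = 2*(4*r+1)*ca" "(2*r+2)*cc = 2*(4*r+3)*cb" "(2*r+3)*cd = 2*(4*r+5)*cc" "(2*r+4)*ce = 2*(4*r+7)*cd"
  shows "Den r * ((64 + 64*b + 16*r)*(64 + 64*b + 16*r)*ca + (64 + 64*b + 16*r)*(-16*b - 8*r)*cb + (64 + 64*b + 16*r)*r*cc + (-16*b - 8*r)*(64 + 64*b + 16*r)*cb + (-16*b - 8*r)*(-16*b - 8*r)*cc + (-16*b - 8*r)*r*cd + r*(64 + 64*b + 16*r)*cc + r*(-16*b - 8*r)*cd + r*r*ce) = 16*ca*Sr r b"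
  using assms unfolding Den_def Sr_def by algebra

lemma algC:
  fixes r b ca cb cc cd ce Caa Cab Cac Cba Cbb Cbc Cca Ccb Ccc Maa Mab Mac Mba Mbb Mbc Mca Mcb Mcc :: real
  assumes "(2*r+1)*cb = 2*(4*r+1)*ca" "(2*r+2)*cc = 2*(4*r+3)*cb" "(2*r+3)*cd = 2*(4*r+5)*cc" "(2*r+4)*ce = 2*(4*r+7)*cd" "(2*r+1)*Caa = (2*r+0)*ca" "(2*r+2)*Cab = (2*r+1)*cb" "(2*r+3)*Cac = (2*r+2)*cc" "(2*r+2)*Cba = (2*r+1)*cb" "(2*r+3)*Cbb = (2*r+2)*cc" "(2*r+4)*Cbc = (2*r+3)*cd" "(2*r+3)*Cca = (2*r+2)*cc" "(2*r+4)*Ccb = (2*r+3)*cd" "(2*r+5)*Ccc = (2*r+4)*ce"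
  shows "Den r * ((64 + 64*b + 16*r)*(64 + 64*b + 16*r)*Caa + (64 + 64*b + 16*r)*(-16*b - 8*r)*Cab + (64 + 64*b + 16*r)*r*Cac + (-16*b - 8*r)*(64 + 64*b + 16*r)*Cba + (-16*b - 8*r)*(-16*b - 8*r)*Cbb + (-16*b - 8*r)*r*Cbc + r*(64 + 64*b + 16*r)*Cca + r*(-16*b - 8*r)*Ccb + r*r*Ccc) = 16*ca*Cr r b"
  using assms unfolding Den_def Cr_def by algebra

lemma algM:
  fixes r b ca cb cc cd ce Caa Cab Cac Cba Cbb Cbc Cca Ccb Ccc Maa Mab Mac Mba Mbb Mbc Mca Mcb Mcc :: real
  assumes "(2*r+1)*cb = 2*(4*r+1)*ca" "(2*r+2)*cc = 2*(4*r+3)*cb" "(2*r+3)*cd = 2*(4*r+5)*cc" "(2*r+4)*ce = 2*(4*r+7)*cd" "(4*r-1)*Maa = r*r*ca" "(2*r+1)*Mab = 2*(r+0)*(r+1)*ca" "(2*r+2)*Mac = 2*(r+0)*(r+2)*cb" "(2*r+1)*Mba = 2*(r+1)*(r+0)*ca" "(2*r+2)*Mbb = 2*(r+1)*(r+1)*cb" "(2*r+3)*Mbc = 2*(r+1)*(r+2)*cc" "(2*r+2)*Mca = 2*(r+2)*(r+0)*cb" "(2*r+3)*Mcb = 2*(r+2)*(r+1)*cc" "(2*r+4)*Mcc = 2*(r+2)*(r+2)*cd"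
  shows "Den r * ((64 + 64*b + 16*r)*(64 + 64*b + 16*r)*Maa + (64 + 64*b + 16*r)*(-16*b - 8*r)*Mab + (64 + 64*b + 16*r)*r*Mac + (-16*b - 8*r)*(64 + 64*b + 16*r)*Mba + (-16*b - 8*r)*(-16*b - 8*r)*Mbb + (-16*b - 8*r)*r*Mbc + r*(64 + 64*b + 16*r)*Mca + r*(-16*b - 8*r)*Mcb + r*r*Mcc) = 16*ca*Mr r b"
  using assms unfolding Den_def Mr_def by algebra

lemma chain_d: "(2*real n + real d + 1) * cen (2*n+d+1) = 2*(4*real n + 2*real d + 1) * cen (2*n+d)"
  using cen_step[of "2*n+d"] by (simp add: algebra_simps)

lemma chains: "(2*real n+1)*cen (2*n+1) = 2*(4*real n+1)*cen (2*n)"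
   "(2*real n+2)*cen (2*n+2) = 2*(4*real n+3)*cen (2*n+1)"
   "(2*real n+3)*cen (2*n+3) = 2*(4*real n+5)*cen (2*n+2)"
   "(2*real n+4)*cen (2*n+4) = 2*(4*real n+7)*cen (2*n+3)"
proof -
  have e: "2*n+0 = 2*n" "2*n+0+1 = 2*n+1" "2*n+1+1 = 2*n+2" "2*n+2+1 = 2*n+3" "2*n+3+1 = 2*n+4" by simp_all
  show "(2*real n+1)*cen (2*n+1) = 2*(4*real n+1)*cen (2*n)" using chain_d[of n 0] unfolding e by simp
  show "(2*real n+2)*cen (2*n+2) = 2*(4*real n+3)*cen (2*n+1)" using chain_d[of n 1] unfolding e by (simp add: algebra_simps)
  show "(2*real n+3)*cen (2*n+3) = 2*(4*real n+5)*cen (2*n+2)" using chain_d[of n 2] unfolding e by (simp add: algebra_simps)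
  show "(2*real n+4)*cen (2*n+4) = 2*(4*real n+7)*cen (2*n+3)" using chain_d[of n 3] unfolding e by (simp add: algebra_simps)
qed

lemma Ch00: assumes "n \<ge> 1" shows "(2*real n+1)*(\<Sum>k\<in>{-(int n+3)..int n+3}. 1 * (bb n k * bb n (k+1))) = (2*real n+0)*cen (2*n)"
  using C00[OF assms] by (simp add: field_simps)

lemma Mh00: assumes "n \<ge> 1" shows "(4*real n-1)*(\<Sum>k\<in>{-(int n+3)..int n+3}. (real_of_int k)^2 * (bb n k * bb n k)) = real n*real n*cen (2*n)"
  using M00[OF assms] assms by (simp add: field_simps)

lemma Ch01: assumes "n \<ge> 1" shows "(2*real n+2)*(\<Sum>k\<in>{-(int n+3)..int n+3}. 1 * (bb n k * bb (n+1) (k+1))) = (2*real n+1)*cen (2*n+1)"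
  using C01[OF assms] by (simp add: field_simps)

lemma Mh01: assumes "n \<ge> 1" shows "(2*real n+1)*(\<Sum>k\<in>{-(int n+3)..int n+3}. (real_of_int k)^2 * (bb n k * bb (n+1) k)) = 2*(real n+0)*(real n+1)*cen (2*n)"
proof -
  have m: "(\<Sum>k\<in>{-(int n+3)..int n+3}. (real_of_int k)^2 * (bb n k * bb (n+1) k)) = (real n + 0) * (real n + 1) * cen (2*n+1) / (2 * (2*real n+1) - 1)" by (rule M01[OF assms])
  have c: "(2*real n+1)*cen (2*n+1) = 2*(4*real n+1)*cen (2*n)" by (rule chains(1))
  have p: "2 * (2*real n+1) - 1 > 0" "2*real n + 1 > 0" using assms by simp_all
  show ?thesis unfolding m using c p by (simp add: field_simps)
qed

lemma Ch02: assumes "n \<ge> 1" shows "(2*real n+3)*(\<Sum>k\<in>{-(int n+3)..int n+3}. 1 * (bb n k * bb (n+2) (k+1))) = (2*real n+2)*cen (2*n+2)"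
  using C02[OF assms] by (simp add: field_simps)

lemma Mh02: assumes "n \<ge> 1" shows "(2*real n+2)*(\<Sum>k\<in>{-(int n+3)..int n+3}. (real_of_int k)^2 * (bb n k * bb (n+2) k)) = 2*(real n+0)*(real n+2)*cen (2*n+1)"
proof -
  have m: "(\<Sum>k\<in>{-(int n+3)..int n+3}. (real_of_int k)^2 * (bb n k * bb (n+2) k)) = (real n + 0) * (real n + 2) * cen (2*n+2) / (2 * (2*real n+2) - 1)" by (rule M02[OF assms])
  have c: "(2*real n+2)*cen (2*n+2) = 2*(4*real n+3)*cen (2*n+1)" by (rule chains(2))
  have p: "2 * (2*real n+2) - 1 > 0" "2*real n + 2 > 0" using assms by simp_all
  show ?thesis unfolding m using c p by (simp add: field_simps)
qed

lemma Ch10: assumes "n \<ge> 1" shows "(2*real n+2)*(\<Sum>k\<in>{-(int n+3)..int n+3}. 1 * (bb (n+1) k * bb n (k+1))) = (2*real n+1)*cen (2*n+1)"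
  using C10[OF assms] by (simp add: field_simps)

lemma Mh10: assumes "n \<ge> 1" shows "(2*real n+1)*(\<Sum>k\<in>{-(int n+3)..int n+3}. (real_of_int k)^2 * (bb (n+1) k * bb n k)) = 2*(real n+1)*(real n+0)*cen (2*n)"
proof -
  have m: "(\<Sum>k\<in>{-(int n+3)..int n+3}. (real_of_int k)^2 * (bb (n+1) k * bb n k)) = (real n + 1) * (real n + 0) * cen (2*n+1) / (2 * (2*real n+1) - 1)" by (rule M10[OF assms])
  have c: "(2*real n+1)*cen (2*n+1) = 2*(4*real n+1)*cen (2*n)" by (rule chains(1))
  have p: "2 * (2*real n+1) - 1 > 0" "2*real n + 1 > 0" using assms by simp_all
  show ?thesis unfolding m using c p by (simp add: field_simps)
qed

lemma Ch11: assumes "n \<ge> 1" shows "(2*real n+3)*(\<Sum>k\<in>{-(int n+3)..int n+3}. 1 * (bb (n+1) k * bb (n+1) (k+1))) = (2*real n+2)*cen (2*n+2)"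
  using C11[OF assms] by (simp add: field_simps)

lemma Mh11: assumes "n \<ge> 1" shows "(2*real n+2)*(\<Sum>k\<in>{-(int n+3)..int n+3}. (real_of_int k)^2 * (bb (n+1) k * bb (n+1) k)) = 2*(real n+1)*(real n+1)*cen (2*n+1)"
proof -
  have m: "(\<Sum>k\<in>{-(int n+3)..int n+3}. (real_of_int k)^2 * (bb (n+1) k * bb (n+1) k)) = (real n + 1) * (real n + 1) * cen (2*n+2) / (2 * (2*real n+2) - 1)" by (rule M11[OF assms])
  have c: "(2*real n+2)*cen (2*n+2) = 2*(4*real n+3)*cen (2*n+1)" by (rule chains(2))
  have p: "2 * (2*real n+2) - 1 > 0" "2*real n + 2 > 0" using assms by simp_all
  show ?thesis unfolding m using c p by (simp add: field_simps)
qed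

lemma Ch12: assumes "n \<ge> 1" shows "(2*real n+4)*(\<Sum>k\<in>{-(int n+3)..int n+3}. 1 * (bb (n+1) k * bb (n+2) (k+1))) = (2*real n+3)*cen (2*n+3)"
  using C12[OF assms] by (simp add: field_simps)

lemma Mh12: assumes "n \<ge> 1" shows "(2*real n+3)*(\<Sum>k\<in>{-(int n+3)..int n+3}. (real_of_int k)^2 * (bb (n+1) k * bb (n+2) k)) = 2*(real n+1)*(real n+2)*cen (2*n+2)"
proof -
  have m: "(\<Sum>k\<in>{-(int n+3)..int n+3}. (real_of_int k)^2 * (bb (n+1) k * bb (n+2) k)) = (real n + 1) * (real n + 2) * cen (2*n+3) / (2 * (2*real n+3) - 1)" by (rule M12[OF assms])
  have c: "(2*real n+3)*cen (2*n+3) = 2*(4*real n+5)*cen (2*n+2)" by (rule chains(3))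
  have p: "2 * (2*real n+3) - 1 > 0" "2*real n + 3 > 0" using assms by simp_all
  show ?thesis unfolding m using c p by (simp add: field_simps)
qed

lemma Ch20: assumes "n \<ge> 1" shows "(2*real n+3)*(\<Sum>k\<in>{-(int n+3)..int n+3}. 1 * (bb (n+2) k * bb n (k+1))) = (2*real n+2)*cen (2*n+2)"
  using C20[OF assms] by (simp add: field_simps)

lemma Mh20: assumes "n \<ge> 1" shows "(2*real n+2)*(\<Sum>k\<in>{-(int n+3)..int n+3}. (real_of_int k)^2 * (bb (n+2) k * bb n k)) = 2*(real n+2)*(real n+0)*cen (2*n+1)"
proof -
  have m: "(\<Sum>k\<in>{-(int n+3)..int n+3}. (real_of_int k)^2 * (bb (n+2) k * bb n k)) = (real n + 2) * (real n + 0) * cen (2*n+2) / (2 * (2*real n+2) - 1)" by (rule M20[OF assms])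
  have c: "(2*real n+2)*cen (2*n+2) = 2*(4*real n+3)*cen (2*n+1)" by (rule chains(2))
  have p: "2 * (2*real n+2) - 1 > 0" "2*real n + 2 > 0" using assms by simp_all
  show ?thesis unfolding m using c p by (simp add: field_simps)
qed

lemma Ch21: assumes "n \<ge> 1" shows "(2*real n+4)*(\<Sum>k\<in>{-(int n+3)..int n+3}. 1 * (bb (n+2) k * bb (n+1) (k+1))) = (2*real n+3)*cen (2*n+3)"
  using C21[OF assms] by (simp add: field_simps)

lemma Mh21: assumes "n \<ge> 1" shows "(2*real n+3)*(\<Sum>k\<in>{-(int n+3)..int n+3}. (real_of_int k)^2 * (bb (n+2) k * bb (n+1) k)) = 2*(real n+2)*(real n+1)*cen (2*n+2)"
proof -
  have m: "(\<Sum>k\<in>{-(int n+3)..int n+3}. (real_of_int k)^2 * (bb (n+2) k * bb (n+1) k)) = (real n + 2) * (real n + 1) * cen (2*n+3) / (2 * (2*real n+3) - 1)" by (rule M21[OF assms])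
  have c: "(2*real n+3)*cen (2*n+3) = 2*(4*real n+5)*cen (2*n+2)" by (rule chains(3))
  have p: "2 * (2*real n+3) - 1 > 0" "2*real n + 3 > 0" using assms by simp_all
  show ?thesis unfolding m using c p by (simp add: field_simps)
qed

lemma Ch22: assumes "n \<ge> 1" shows "(2*real n+5)*(\<Sum>k\<in>{-(int n+3)..int n+3}. 1 * (bb (n+2) k * bb (n+2) (k+1))) = (2*real n+4)*cen (2*n+4)"
  using C22[OF assms] by (simp add: field_simps)

lemma Mh22: assumes "n \<ge> 1" shows "(2*real n+4)*(\<Sum>k\<in>{-(int n+3)..int n+3}. (real_of_int k)^2 * (bb (n+2) k * bb (n+2) k)) = 2*(real n+2)*(real n+2)*cen (2*n+3)"
proof -
  have m: "(\<Sum>k\<in>{-(int n+3)..int n+3}. (real_of_int k)^2 * (bb (n+2) k * bb (n+2) k)) = (real n + 2) * (real n + 2) * cen (2*n+4) / (2 * (2*real n+4) - 1)" by (rule M22[OF assms])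
  have c: "(2*real n+4)*cen (2*n+4) = 2*(4*real n+7)*cen (2*n+3)" by (rule chains(4))
  have p: "2 * (2*real n+4) - 1 > 0" "2*real n + 4 > 0" using assms by simp_all
  show ?thesis unfolding m using c p by (simp add: field_simps)
qed

lemma fam_all: assumes "n \<ge> 1"
  shows "Den (real n) * ((64 + 64*b + 16*real n)*(64 + 64*b + 16*real n)*(\<Sum>k\<in>{-(int n+3)..int n+3}. 1 * (bb n k * bb n k)) + (64 + 64*b + 16*real n)*(-16*b - 8*real n)*(\<Sum>k\<in>{-(int n+3)..int n+3}. 1 * (bb n k * bb (n+1) k)) + (64 + 64*b + 16*real n)*real n*(\<Sum>k\<in>{-(int n+3)..int n+3}. 1 * (bb n k * bb (n+2) k)) + (-16*b - 8*real n)*(64 + 64*b + 16*real n)*(\<Sum>k\<in>{-(int n+3)..int n+3}. 1 * (bb (n+1) k * bb n k)) + (-16*b - 8*real n)*(-16*b - 8*real n)*(\<Sum>k\<in>{-(int n+3)..int n+3}. 1 * (bb (n+1) k * bb (n+1) k)) + (-16*b - 8*real n)*real n*(\<Sum>k\<in>{-(int n+3)..int n+3}. 1 * (bb (n+1) k * bb (n+2) k)) + real n*(64 + 64*b + 16*real n)*(\<Sum>k\<in>{-(int n+3)..int n+3}. 1 * (bb (n+2) k * bb n k)) + real n*(-16*b - 8*real n)*(\<Sum>k\<in>{-(int n+3)..int n+3}. 1 * (bb (n+2) k * bb (n+1) k)) + real n*real n*(\<Sum>k\<in>{-(int n+3)..int n+3}. 1 * (bb (n+2) k * bb (n+2) k)))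 = 16*cen (2*n)*Sr (real n) b"
    "Den (real n) * ((64 + 64*b + 16*real n)*(64 + 64*b + 16*real n)*(\<Sum>k\<in>{-(int n+3)..int n+3}. 1 * (bb n k * bb n (k+1))) + (64 + 64*b + 16*real n)*(-16*b - 8*real n)*(\<Sum>k\<in>{-(int n+3)..int n+3}. 1 * (bb n k * bb (n+1) (k+1))) + (64 + 64*b + 16*real n)*real n*(\<Sum>k\<in>{-(int n+3)..int n+3}. 1 * (bb n k * bb (n+2) (k+1))) + (-16*b - 8*real n)*(64 + 64*b + 16*real n)*(\<Sum>k\<in>{-(int n+3)..int n+3}. 1 * (bb (n+1) k * bb n (k+1))) + (-16*b - 8*real n)*(-16*b - 8*real n)*(\<Sum>k\<in>{-(int n+3)..int n+3}. 1 * (bb (n+1) k * bb (n+1) (k+1))) + (-16*b - 8*real n)*real n*(\<Sum>k\<in>{-(int n+3)..int n+3}. 1 * (bb (n+1) k * bb (n+2) (k+1))) + real n*(64 + 64*b + 16*real n)*(\<Sum>k\<in>{-(int n+3)..int n+3}. 1 * (bb (n+2) k * bb n (k+1))) + real n*(-16*b - 8*real n)*(\<Sum>k\<in>{-(int n+3)..int n+3}. 1 * (bb (n+2) k * bb (n+1) (k+1))) + real n*real n*(\<Sum>k\<in>{-(int n+3)..int n+3}. 1 * (bb (n+2) k * bb (n+2) (k+1)))) = 16*cen (2*n)*Cr (real n) b"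
    "Den (real n) * ((64 + 64*b + 16*real n)*(64 + 64*b + 16*real n)*(\<Sum>k\<in>{-(int n+3)..int n+3}. (real_of_int k)^2 * (bb n k * bb n k)) + (64 + 64*b + 16*real n)*(-16*b - 8*real n)*(\<Sum>k\<in>{-(int n+3)..int n+3}. (real_of_int k)^2 * (bb n k * bb (n+1) k)) + (64 + 64*b + 16*real n)*real n*(\<Sum>k\<in>{-(int n+3)..int n+3}. (real_of_int k)^2 * (bb n k * bb (n+2) k)) + (-16*b - 8*real n)*(64 + 64*b + 16*real n)*(\<Sum>k\<in>{-(int n+3)..int n+3}. (real_of_int k)^2 * (bb (n+1) k * bb n k)) + (-16*b - 8*real n)*(-16*b - 8*real n)*(\<Sum>k\<in>{-(int n+3)..int n+3}. (real_of_int k)^2 * (bb (n+1) k * bb (n+1) k)) + (-16*b - 8*real n)*real n*(\<Sum>k\<in>{-(int n+3)..int n+3}. (real_of_int k)^2 * (bb (n+1) k * bb (n+2) k)) + real n*(64 + 64*b + 16*real n)*(\<Sum>k\<in>{-(int n+3)..int n+3}. (real_of_int k)^2 * (bb (n+2) k * bb n k)) + real n*(-16*b - 8*real n)*(\<Sum>k\<in>{-(int n+3)..int n+3}. (real_of_int k)^2 * (bb (n+2) k * bb (n+1) k)) + real n*real n*(\<Sum>k\<in>{-(int n+3)..int n+3}. (real_of_int k)^2 * (bb (n+2) k * bb (n+2) k))) = 16*cen (2*n)*Mr (real n) b"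
proof -
  show "Den (real n) * ((64 + 64*b + 16*real n)*(64 + 64*b + 16*real n)*(\<Sum>k\<in>{-(int n+3)..int n+3}. 1 * (bb n k * bb n k)) + (64 + 64*b + 16*real n)*(-16*b - 8*real n)*(\<Sum>k\<in>{-(int n+3)..int n+3}. 1 * (bb n k * bb (n+1) k)) + (64 + 64*b + 16*real n)*real n*(\<Sum>k\<in>{-(int n+3)..int n+3}. 1 * (bb n k * bb (n+2) k)) + (-16*b - 8*real n)*(64 + 64*b + 16*real n)*(\<Sum>k\<in>{-(int n+3)..int n+3}. 1 * (bb (n+1) k * bb n k)) + (-16*b - 8*real n)*(-16*b - 8*real n)*(\<Sum>k\<in>{-(int n+3)..int n+3}. 1 * (bb (n+1) k * bb (n+1) k)) + (-16*b - 8*real n)*real n*(\<Sum>k\<in>{-(int n+3)..int n+3}. 1 * (bb (n+1) k * bb (n+2) k)) + real n*(64 + 64*b + 16*real n)*(\<Sum>k\<in>{-(int n+3)..int n+3}. 1 * (bb (n+2) k * bb n k)) + real n*(-16*b - 8*real n)*(\<Sum>k\<in>{-(int n+3)..int n+3}. 1 * (bb (n+2) k * bb (n+1) k)) + real n*real n*(\<Sum>k\<in>{-(int n+3)..int n+3}. 1 * (bb (n+2) k * bb (n+2) k))) = 16*cen (2*n)*Sr (real n) b"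
    unfolding S00 S01 S02 S10 S11 S12 S20 S21 S22
    by (rule algS2[where cb="cen (2*n+1)" and cc="cen (2*n+2)" and cd="cen (2*n+3)" and ce="cen (2*n+4)"]) (simp_all only: chains)
  show "Den (real n) * ((64 + 64*b + 16*real n)*(64 + 64*b + 16*real n)*(\<Sum>k\<in>{-(int n+3)..int n+3}. 1 * (bb n k * bb n (k+1))) + (64 + 64*b + 16*real n)*(-16*b - 8*real n)*(\<Sum>k\<in>{-(int n+3)..int n+3}. 1 * (bb n k * bb (n+1) (k+1))) + (64 + 64*b + 16*real n)*real n*(\<Sum>k\<in>{-(int n+3)..int n+3}. 1 * (bb n k * bb (n+2) (k+1))) + (-16*b - 8*real n)*(64 + 64*b + 16*real n)*(\<Sum>k\<in>{-(int n+3)..int n+3}. 1 * (bb (n+1) k * bb n (k+1))) + (-16*b - 8*real n)*(-16*b - 8*real n)*(\<Sum>k\<in>{-(int n+3)..int n+3}. 1 * (bb (n+1) k * bb (n+1) (k+1))) + (-16*b - 8*real n)*real n*(\<Sum>k\<in>{-(int n+3)..int n+3}. 1 * (bb (n+1) k * bb (n+2) (k+1))) + real n*(64 + 64*b + 16*real n)*(\<Sum>k\<in>{-(int n+3)..int n+3}. 1 * (bb (n+2) k * bb n (k+1))) + real n*(-16*b - 8*real n)*(\<Sum>k\<in>{-(int n+3)..int n+3}. 1 * (bb (n+2) k * bb (n+1) (k+1))) + real n*real n*(\<Sum>k\<in>{-(int n+3)..int n+3}. 1 * (bb (n+2) k * bb (n+2) (k+1)))) = 16*cen (2*n)*Cr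 (real n) b"
    by (rule algC[where cb="cen (2*n+1)" and cc="cen (2*n+2)" and cd="cen (2*n+3)" and ce="cen (2*n+4)"]) (simp_all only: chains Ch00[OF assms] Ch01[OF assms] Ch02[OF assms] Ch10[OF assms] Ch11[OF assms] Ch12[OF assms] Ch20[OF assms] Ch21[OF assms] Ch22[OF assms])
  show "Den (real n) * ((64 + 64*b + 16*real n)*(64 + 64*b + 16*real n)*(\<Sum>k\<in>{-(int n+3)..int n+3}. (real_of_int k)^2 * (bb n k * bb n k)) + (64 + 64*b + 16*real n)*(-16*b - 8*real n)*(\<Sum>k\<in>{-(int n+3)..int n+3}. (real_of_int k)^2 * (bb n k * bb (n+1) k)) + (64 + 64*b + 16*real n)*real n*(\<Sum>k\<in>{-(int n+3)..int n+3}. (real_of_int k)^2 * (bb n k * bb (n+2) k)) + (-16*b - 8*real n)*(64 + 64*b + 16*real n)*(\<Sum>k\<in>{-(int n+3)..int n+3}. (real_of_int k)^2 * (bb (n+1) k * bb n k)) + (-16*b - 8*real n)*(-16*b - 8*real n)*(\<Sum>k\<in>{-(int n+3)..int n+3}. (real_of_int k)^2 * (bb (n+1) k * bb (n+1) k)) + (-16*b - 8*real n)*real n*(\<Sum>k\<in>{-(int n+3)..int n+3}. (real_of_int k)^2 * (bb (n+1) k * bb (n+2) k)) + real n*(64 + 64*b + 16*real n)*(\<Sum>k\<in>{-(int n+3)..int n+3}. (real_of_int k)^2 * (bb (n+2) k * bb n k)) + real n*(-16*b - 8*real n)*(\<Sum>k\<in>{-(int n+3)..int n+3}. (real_of_int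 k)^2 * (bb (n+2) k * bb (n+1) k)) + real n*real n*(\<Sum>k\<in>{-(int n+3)..int n+3}. (real_of_int k)^2 * (bb (n+2) k * bb (n+2) k))) = 16*cen (2*n)*Mr (real n) b"
    by (rule algM[where cb="cen (2*n+1)" and cc="cen (2*n+2)" and cd="cen (2*n+3)" and ce="cen (2*n+4)"]) (simp_all only: chains Mh00[OF assms] Mh01[OF assms] Mh02[OF assms] Mh10[OF assms] Mh11[OF assms] Mh12[OF assms] Mh20[OF assms] Mh21[OF assms] Mh22[OF assms])
qed

lemma fin_has_sum:
  fixes f :: "int \<Rightarrow> real"
  assumes "\<And>k. k \<notin> {-K..K} \<Longrightarrow> f k = 0"
  shows "(f has_sum (\<Sum>k\<in>{-K..K}. f k)) UNIV"
  by (rule has_sum_finite_neutralI) (use assms in auto)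

lemma adm_of:
  fixes x :: "int \<Rightarrow> real" and K :: int and s :: real
  assumes supp: "\<And>k. k \<notin> {-K..K} \<Longrightarrow> x k = 0"
    and Spos: "(\<Sum>k\<in>{-K..K}. (x k)^2) > 0"
    and tau: "(\<Sum>k\<in>{-K..K}. x k * x (k+1)) / (\<Sum>k\<in>{-K..K}. (x k)^2) = 1 / sqrt (1 + s)"
  shows "admissible s (\<lambda>k. x k / sqrt (\<Sum>k\<in>{-K..K}. (x k)^2))"
    "time_spread (\<lambda>k. x k / sqrt (\<Sum>k\<in>{-K..K}. (x k)^2)) = (\<Sum>k\<in>{-K..K}. (real_of_int k)^2 * (x k)^2) / (\<Sum>k\<in>{-K..K}. (x k)^2)"
proof -
  define S where "S = (\<Sum>k\<in>{-K..K}. (x k)^2)"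
  have S0: "S > 0" using Spos by (simp add: S_def)
  have sq: "sqrt S * sqrt S = S" using S0 by simp
  define y where "y = (\<lambda>k. x k / sqrt S)"
  have y2: "\<And>k. (y k)^2 = (x k)^2 / S" unfolding y_def using S0 by (simp add: power_divide)
  have yy: "\<And>k. y k * y (k+1) = x k * x (k+1) / S" unfolding y_def using sq by (simp add: field_simps)
  have h1: "((\<lambda>k. (y k)^2) has_sum 1) UNIV"
  proof -
    have "((\<lambda>k. (y k)^2) has_sum (\<Sum>k\<in>{-K..K}. (y k)^2)) UNIV"
      by (rule fin_has_sum) (simp add: y_def supp)
    moreover have "(\<Sum>k\<in>{-K..K}. (y k)^2) = 1" unfolding y2 using S0 by (simp add: S_def sum_divide_distrib[symmetric])
    ultimately show ?thesis by simp
  qed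
  have h2: "((\<lambda>k. y k * y (k+1)) has_sum (1 / sqrt (1 + s))) UNIV"
  proof -
    have "((\<lambda>k. y k * y (k+1)) has_sum (\<Sum>k\<in>{-K..K}. y k * y (k+1))) UNIV"
      by (rule fin_has_sum) (simp add: y_def supp)
    moreover have "(\<Sum>k\<in>{-K..K}. y k * y (k+1)) = 1 / sqrt (1+s)" unfolding yy
      using tau by (simp add: S_def sum_divide_distrib[symmetric])
    ultimately show ?thesis by simp
  qed
  have h3: "((\<lambda>k. (real_of_int k)^2 * (y k)^2) has_sum (\<Sum>k\<in>{-K..K}. (real_of_int k)^2 * (x k)^2) / S) UNIV"
  proof -
    have "((\<lambda>k. (real_of_int k)^2 * (y k)^2) has_sum (\<Sum>k\<in>{-K..K}. (real_of_int k)^2 * (y k)^2)) UNIV"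
      by (rule fin_has_sum) (simp add: y_def supp)
    moreover have "(\<Sum>k\<in>{-K..K}. (real_of_int k)^2 * (y k)^2) = (\<Sum>k\<in>{-K..K}. (real_of_int k)^2 * (x k)^2) / S"
      unfolding y2 by (simp add: sum_divide_distrib[symmetric])
    ultimately show ?thesis by simp
  qed
  show "admissible s (\<lambda>k. x k / sqrt (\<Sum>k\<in>{-K..K}. (x k)^2))"
    unfolding admissible_def S_def[symmetric] y_def[symmetric] using h1 h2 h3 by (auto dest: has_sum_imp_summable)
  show "time_spread (\<lambda>k. x k / sqrt (\<Sum>k\<in>{-K..K}. (x k)^2)) = (\<Sum>k\<in>{-K..K}. (real_of_int k)^2 * (x k)^2) / (\<Sum>k\<in>{-K..K}. (x k)^2)"
    unfolding time_spread_def S_def[symmetric] y_def[symmetric] using h3 by (simp add: infsumI)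
qed

lemma delta_has_sum: "((\<lambda>k::int. if k = 0 then c else 0) has_sum (c::real)) UNIV"
  by (rule has_sum_finite_neutralI[where B="{0}"]) auto

lemma has_sum_diff':
  fixes f g :: "int \<Rightarrow> real"
  assumes "(f has_sum a) A" "(g has_sum b) A"
  shows "((\<lambda>x. f x - g x) has_sum (a - b)) A"
proof -
  have "((\<lambda>x. - g x) has_sum (-b)) A" using has_sum_uminus[where f=g and a="-b" and A=A] assms(2) by simp
  from has_sum_add[OF assms(1) this] show ?thesis by simp
qed

lemma amgm_t: fixes t u v :: real assumes "t > 0" shows "u * v \<le> t/2 * u^2 + 1/(2*t) * v^2"
proof -
  have "0 \<le> (t * u - v)^2 / t" using assms by simp
  also have "(t * u - v)^2 / t = 2 * (t/2 * u^2 + 1/(2*t) * v^2 - u * v)"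
    using assms by (simp add: field_simps power2_eq_square)
  finally show ?thesis by simp
qed

lemma lower_one:
  fixes s :: real and x :: "int \<Rightarrow> real"
  assumes s: "s > 0" and adm: "admissible s x"
  shows "time_spread x \<ge> 1 - sqrt (s / (1 + s))"
proof -
  have hx2: "((\<lambda>k. (x k)^2) has_sum 1) UNIV"
   and htau: "((\<lambda>k. x k * x (k + 1)) has_sum (1 / sqrt (1 + s))) UNIV"
   and hT: "(\<lambda>k. (real_of_int k)\<^sup>2 * (x k)\<^sup>2) summable_on UNIV"
    using adm unfolding admissible_def by auto
  define R where "R = sqrt (1+s)"
  define q where "q = sqrt s"
  define t where "t = R - q"
  have q0: "q > 0" using s by (simp add: q_def)
  have Rq: "R > q" unfolding R_def q_def using s by (simp add: real_sqrt_less_iff)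
  have t0: "t > 0" using Rq by (simp add: t_def)
  have RR: "R*R = 1 + s" unfolding R_def using s by simp
  have qq: "q*q = s" unfolding q_def using s by simp
  have tinv: "1/t = R + q"
  proof -
    have "t * (R + q) = 1" unfolding t_def using RR qq by (simp add: algebra_simps)
    then show ?thesis using t0 by (simp add: field_simps)
  qed
  have Rt: "t/2 + 1/(2*t) = R"
  proof -
    have "1/(2*t) = (R+q)/2" using tinv by (simp add: field_simps)
    then show ?thesis by (simp add: t_def field_simps)
  qed
  define a where "a = (\<lambda>k::int. (if k \<ge> 0 then t/2 else 1/(2*t)) * (x k)^2)"
  define b where "b = (\<lambda>k::int. (if k \<ge> 1 then 1/(2*t) else t/2) * (x k)^2)"
  have summ2: "(\<lambda>k. (x k)^2) summable_on UNIV" using hx2 by (rule has_sum_imp_summable)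
  have summC: "(\<lambda>k. (t/2 + 1/(2*t)) * (x k)^2) summable_on UNIV"
    by (rule summable_on_cmult_right[OF summ2])
  have w1: "\<And>P. (if P then t/2 else 1/(2*t)) \<le> t/2 + 1/(2*t)" using t0 by auto
  have w2: "\<And>P. (if P then 1/(2*t) else t/2) \<le> t/2 + 1/(2*t)" using t0 by auto
  have w3: "\<And>P. 0 \<le> (if P then t/2 else 1/(2*t))" "\<And>P. 0 \<le> (if P then 1/(2*t) else t/2)" using t0 by auto
  have sa: "a summable_on UNIV"
    by (rule summable_on_comparison_test[OF summC]) (simp_all add: a_def mult_right_mono[OF w1] w3)
  have sb: "b summable_on UNIV"
    by (rule summable_on_comparison_test[OF summC]) (simp_all add: b_def mult_right_mono[OF w2] w3)
  define A where "A = infsum a UNIV"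
  define B where "B = infsum b UNIV"
  have ha: "(a has_sum A) UNIV" using sa by (simp add: A_def)
  have hb: "(b has_sum B) UNIV" using sb by (simp add: B_def)
  have hb1: "((\<lambda>k. b (k+1)) has_sum B) UNIV"
  proof -
    have "inj_on (\<lambda>k::int. k+1) UNIV" by (simp add: inj_on_def)
    moreover have "(\<lambda>k::int. k+1) ` UNIV = UNIV" by (rule surjI[where f="\<lambda>k::int. k - 1"]) simp
    ultimately show ?thesis using has_sum_reindex[of "\<lambda>k::int. k+1" UNIV b B] hb by (simp add: comp_def)
  qed
  have hab: "((\<lambda>k. a k + b k) has_sum A + B) UNIV" by (rule has_sum_add[OF ha hb])
  have hab2: "((\<lambda>k. a k + b k) has_sum R * 1 - q * (x 0)^2) UNIV"
  proof -
    have e: "(\<lambda>k. a k + b k) = (\<lambda>k. R * (x k)^2 - (if k = 0 then q * (x 0)^2 else 0))"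
    proof
      fix k :: int
      consider "k = 0" | "k \<ge> 1" | "k < 0" by linarith
      then show "a k + b k = R * (x k)^2 - (if k = 0 then q * (x 0)^2 else 0)"
      proof cases
        case 1 then show ?thesis unfolding a_def b_def t_def by (simp add: algebra_simps)
      next
        case 2
        then have "a k + b k = (t/2 + 1/(2*t)) * (x k)^2" unfolding a_def b_def by (simp add: distrib_right)
        then show ?thesis using Rt 2 by simp
      next
        case 3
        then have "a k + b k = (t/2 + 1/(2*t)) * (x k)^2" unfolding a_def b_def by (simp add: distrib_right)
        then show ?thesis using Rt 3 by simp
      qed
    qed
    show ?thesis unfolding e
      by (rule has_sum_diff'[OF has_sum_cmult_right[OF hx2] delta_has_sum])
  qed
  have AB: "A + B = R - q * (x 0)^2" using has_sum_unique[OF hab hab2] by simp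
  have le: "1 / sqrt (1+s) \<le> A + B"
  proof (rule has_sum_mono[OF htau has_sum_add[OF ha hb1]])
    fix k :: int
    show "x k * x (k+1) \<le> a k + b (k+1)"
    proof (cases "k \<ge> 0")
      case True
      then show ?thesis unfolding a_def b_def using amgm_t[OF t0, of "x k" "x (k+1)"] by simp
    next
      case False
      then have "a k + b (k+1) = t/2 * (x (k+1))^2 + 1/(2*t) * (x k)^2" unfolding a_def b_def by simp
      then show ?thesis using amgm_t[OF t0, of "x (k+1)" "x k"] by (simp add: mult.commute)
    qed
  qed
  have x0: "(x 0)^2 \<le> q / R"
  proof -
    have R0: "R > 0" using Rq q0 by simp
    have "1 / R \<le> R - q * (x 0)^2" using le AB by (simp add: R_def)
    then have "1 \<le> R * R - R * (q * (x 0)^2)" using R0 by (simp add: field_simps)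
    then have "R * (q * (x 0)^2) \<le> s" using RR by simp
    then have "q * (R * (x 0)^2) \<le> q * q" using qq by (simp add: algebra_simps)
    then have "R * (x 0)^2 \<le> q" using q0 by (simp add: mult_le_cancel_left_pos)
    then show ?thesis using R0 by (simp add: field_simps)
  qed
  have qR: "q / R = sqrt (s / (1+s))" by (simp add: q_def R_def real_sqrt_divide)
  have hTs: "((\<lambda>k. (real_of_int k)\<^sup>2 * (x k)\<^sup>2) has_sum time_spread x) UNIV"
    using hT by (simp add: time_spread_def)
  have "1 - (x 0)^2 \<le> time_spread x"
  proof (rule has_sum_mono[OF has_sum_diff'[OF hx2 delta_has_sum] hTs])
    fix k :: int
    show "(x k)^2 - (if k = 0 then (x 0)^2 else 0) \<le> (real_of_int k)\<^sup>2 * (x k)\<^sup>2"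
    proof (cases "k = 0")
      case False
      then have "(1::real) \<le> \<bar>real_of_int k\<bar>" by linarith
      then have "1 \<le> \<bar>real_of_int k\<bar>^2" by (rule one_le_power)
      then have "1 \<le> (real_of_int k)^2" by simp
      then have "1 * (x k)^2 \<le> (real_of_int k)^2 * (x k)^2" by (rule mult_right_mono) simp
      then show ?thesis using False by simp
    qed simp
  qed
  then show ?thesis using x0 qR by simp
qed

definition blk :: "int \<Rightarrow> real \<Rightarrow> int \<Rightarrow> real" where
  "blk m u k = (if k = 0 then 1 else if 0 < k \<and> k < m then u else 0)"

lemma blk_S: assumes "m \<ge> 2" shows "(\<Sum>k\<in>{-m..m}. (blk m u k)^2) = 1 + real_of_int (m-1) * u^2"
proof -
  have "(\<Sum>k\<in>{-m..m}. (blk m u k)^2) = (\<Sum>k\<in>{-m..m}. (if k = 0 then 1 else 0) + (if 0 < k \<and> k < m then u^2 else 0))"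
    by (rule sum.cong) (auto simp: blk_def)
  also have "\<dots> = 1 + (\<Sum>k\<in>{k\<in>{-m..m}. 0 < k \<and> k < m}. u^2)"
    using assms by (simp add: sum.distrib sum.inter_filter[symmetric])
  also have "{k\<in>{-m..m}. 0 < k \<and> k < m} = {1..m-1}" by auto
  finally show ?thesis using assms by simp
qed

lemma blk_C: assumes "m \<ge> 2" shows "(\<Sum>k\<in>{-m..m}. blk m u k * blk m u (k+1)) = u + real_of_int (m-2) * u^2"
proof -
  have "(\<Sum>k\<in>{-m..m}. blk m u k * blk m u (k+1)) = (\<Sum>k\<in>{-m..m}. (if k = 0 then u else 0) + (if 0 < k \<and> k < m - 1 then u^2 else 0))"
    by (rule sum.cong) (use assms in \<open>auto simp: blk_def power2_eq_square\<close>)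
  also have "\<dots> = u + (\<Sum>k\<in>{k\<in>{-m..m}. 0 < k \<and> k < m - 1}. u^2)"
    using assms by (simp add: sum.distrib sum.inter_filter[symmetric])
  also have "{k\<in>{-m..m}. 0 < k \<and> k < m - 1} = {1..m-2}" by auto
  finally show ?thesis using assms by simp
qed

lemma nonempty_adm: assumes s: "s > 0" shows "\<exists>x. admissible s x"
proof -
  define tau where "tau = 1 / sqrt (1 + s)"
  have t0: "0 < tau" and t1: "tau < 1" using s by (auto simp: tau_def)
  define m where "m = \<lceil>1 / (1 - tau)\<rceil> + 1"
  have m2: "m \<ge> 2"
  proof -
    have "1 / (1 - tau) \<ge> 1" using t0 t1 by simp
    then show ?thesis unfolding m_def by linarith
  qed
  have mge: "real_of_int m \<ge> 1 / (1 - tau)" unfolding m_def by linarith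
  define f where "f = (\<lambda>u. (u + real_of_int (m-2) * u^2) / (1 + real_of_int (m-1) * u^2))"
  have Spos: "\<And>u. 1 + real_of_int (m-1) * u^2 > 0" using m2 by (simp add: add_pos_nonneg)
  have f0: "f 0 \<le> tau" using t0 by (simp add: f_def)
  have f1: "tau \<le> f 1"
  proof -
    have mpos: "real_of_int m > 0" using m2 by simp
    have "f 1 = (real_of_int m - 1) / real_of_int m" unfolding f_def using m2 by (simp add: field_simps)
    moreover have "tau \<le> (real_of_int m - 1) / real_of_int m"
    proof -
      have "1 \<le> real_of_int m * (1 - tau)" using mge t1 by (simp add: field_simps)
      then show ?thesis using mpos by (simp add: field_simps)
    qed
    ultimately show ?thesis by simp
  qed
  have cont: "continuous_on {0..1} f" unfolding f_def
    by (intro continuous_intros) (use Spos in \<open>auto simp: less_imp_neq[symmetric]\<close>)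
  obtain u where u: "0 \<le> u" "u \<le> 1" "f u = tau" using IVT'[OF f0 f1 _ cont] by auto
  define x where "x = blk m u"
  have supp: "\<And>k. k \<notin> {-m..m} \<Longrightarrow> x k = 0" unfolding x_def blk_def using m2 by auto
  have "admissible s (\<lambda>k. x k / sqrt (\<Sum>k\<in>{-m..m}. (x k)^2))"
  proof (rule adm_of(1)[OF supp])
    show "(\<Sum>k\<in>{-m..m}. (x k)^2) > 0" unfolding x_def blk_S[OF m2] using Spos by simp
    show "(\<Sum>k\<in>{-m..m}. x k * x (k+1)) / (\<Sum>k\<in>{-m..m}. (x k)^2) = 1 / sqrt (1 + s)"
      unfolding x_def blk_S[OF m2] blk_C[OF m2] using u(3) by (simp add: f_def tau_def)
  qed
  then show ?thesis by blast
qed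

lemma lower_part: assumes s: "s > 0" shows "eta_p s \<ge> s * (1 - sqrt (s / (1 + s)))"
proof -
  have ne: "{time_spread x | x. admissible s x} \<noteq> {}" using nonempty_adm[OF s] by auto
  have "V s \<ge> 1 - sqrt (s / (1 + s))"
    unfolding V_def by (rule cInf_greatest[OF ne]) (use lower_one[OF s] in auto)
  then show ?thesis unfolding eta_p_def using s by (simp add: mult_left_mono)
qed

lemma Q_pos: fixes m t :: real assumes "0 \<le> m" "0 \<le> t" "t \<le> 1"
  shows "0 \<le> 2 * (Sr (20+m) (-(6/5)*t))^2 - (Sr (20+m) (-(6/5)*t) - Cr (20+m) (-(6/5)*t)) * (Sr (20+m) (-(6/5)*t) + 16 * Mr (20+m) (-(6/5)*t))"
proof -
  have e: "625 * (2 * (Sr (20+m) (-(6/5)*t))^2 - (Sr (20+m) (-(6/5)*t) - Cr (20+m) (-(6/5)*t)) * (Sr (20+m) (-(6/5)*t) + 16 * Mr (20+m) (-(6/5)*t))) = 717216632539080084000000*(1-t)^4 + 3054398529440735740800000*t*(1-t)^3 + 4534064780854616763840000*t^2*(1-t)^2 + 2950604270140579019136000*t^3*(1-t) + 708266464766993994220800*t^4 + 347486391761921992800000*m*(1-t)^4 + 1454195595029182868160000*m*t*(1-t)^3 + 2154841408121182760448000*m*t^2*(1-t)^2 + 1403440045528037105779200*m*t^3*(1-t) + 338274116336316639893760*m*t^4 + 75416266436781100140000*m^2*(1-t)^4 + 311024745537598600128000*m^2*t*(1-t)^3 + 460326317546665038110400*m^2*t^2*(1-t)^2 + 300149232974658892604160*m^2*t^3*(1-t)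 + 72639711462747822154848*m^2*t^4 + 9656929945537234770000*m^3*(1-t)^4 + 39351335628259835652000*m^3*t*(1-t)^3 + 58205250902601489542400*m^3*t^2*(1-t)^2 + 38007440941681680958560*m^3*t^3*(1-t) + 9235237734594858706608*m^3*t^4 + 808002946238709848125*m^4*(1-t)^4 + 3261368655766662392500*m^4*t*(1-t)^3 + 4823863319704761509550*m^4*t^2*(1-t)^2 + 3155614786991697735220*m^4*t^3*(1-t) + 769829617470742157821*m^4*t^4 + 46161361028633408750*m^5*(1-t)^4 + 184993578395357507000*m^5*t*(1-t)^3 + 273787551572756855700*m^5*t^2*(1-t)^2 + 179489448968467415480*m^5*t^3*(1-t) + 43962011153519197934*m^5*t^4 + 1823591038430555000*m^6*(1-t)^4 + 7272543660269036000*m^6*t*(1-t)^3 + 10776702549333205200*m^6*t^2*(1-t)^2 + 7082853998208666080*m^6*t^3*(1-t) + 1741727435193261944*m^6*t^4 + 49185954944960000*m^7*(1-t)^4 + 195637433358080000*m^7*t*(1-t)^3 + 290461167049958400*m^7*t^2*(1-t)^2 + 191459504517109760*m^7*t^3*(1-t) + 47271151414773248*m^7*t^4 + 866761349120000*m^8*(1-t)^4 + 3446126698496000*m^8*t*(1-t)^3 + 5129964038553600*m^8*t^2*(1-t)^2 + 3392724599767040*m^8*t^3*(1-t) + 841082233536512*m^8*t^4 + 9009889280000*m^9*(1-t)^4 + 35888562176000*m^9*t*(1-t)^3 + 53606350848000*m^9*t^2*(1-t)^2 + 35586572288000*m^9*t^3*(1-t) + 8858894336000*m^9*t^4 + 41943040000*m^10*(1-t)^4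 + 167772160000*m^10*t*(1-t)^3 + 251658240000*m^10*t^2*(1-t)^2 + 167772160000*m^10*t^3*(1-t) + 41943040000*m^10*t^4"
    unfolding Sr_def Cr_def Mr_def by algebra
  have u: "0 \<le> 1 - t" using assms by simp
  have "0 \<le> 717216632539080084000000*(1-t)^4 + 3054398529440735740800000*t*(1-t)^3 + 4534064780854616763840000*t^2*(1-t)^2 + 2950604270140579019136000*t^3*(1-t) + 708266464766993994220800*t^4 + 347486391761921992800000*m*(1-t)^4 + 1454195595029182868160000*m*t*(1-t)^3 + 2154841408121182760448000*m*t^2*(1-t)^2 + 1403440045528037105779200*m*t^3*(1-t) + 338274116336316639893760*m*t^4 + 75416266436781100140000*m^2*(1-t)^4 + 311024745537598600128000*m^2*t*(1-t)^3 + 460326317546665038110400*m^2*t^2*(1-t)^2 + 300149232974658892604160*m^2*t^3*(1-t) + 72639711462747822154848*m^2*t^4 + 9656929945537234770000*m^3*(1-t)^4 + 39351335628259835652000*m^3*t*(1-t)^3 + 58205250902601489542400*m^3*t^2*(1-t)^2 + 38007440941681680958560*m^3*t^3*(1-t) + 9235237734594858706608*m^3*t^4 + 808002946238709848125*m^4*(1-t)^4 + 3261368655766662392500*m^4*t*(1-t)^3 + 4823863319704761509550*m^4*t^2*(1-t)^2 + 3155614786991697735220*m^4*t^3*(1-t) + 769829617470742157821*m^4*t^4 + 46161361028633408750*m^5*(1-t)^4 + 184993578395357507000*m^5*t*(1-t)^3 + 273787551572756855700*m^5*t^2*(1-t)^2 + 179489448968467415480*m^5*t^3*(1-t) + 43962011153519197934*m^5*t^4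 + 1823591038430555000*m^6*(1-t)^4 + 7272543660269036000*m^6*t*(1-t)^3 + 10776702549333205200*m^6*t^2*(1-t)^2 + 7082853998208666080*m^6*t^3*(1-t) + 1741727435193261944*m^6*t^4 + 49185954944960000*m^7*(1-t)^4 + 195637433358080000*m^7*t*(1-t)^3 + 290461167049958400*m^7*t^2*(1-t)^2 + 191459504517109760*m^7*t^3*(1-t) + 47271151414773248*m^7*t^4 + 866761349120000*m^8*(1-t)^4 + 3446126698496000*m^8*t*(1-t)^3 + 5129964038553600*m^8*t^2*(1-t)^2 + 3392724599767040*m^8*t^3*(1-t) + 841082233536512*m^8*t^4 + 9009889280000*m^9*(1-t)^4 + 35888562176000*m^9*t*(1-t)^3 + 53606350848000*m^9*t^2*(1-t)^2 + 35586572288000*m^9*t^3*(1-t) + 8858894336000*m^9*t^4 + 41943040000*m^10*(1-t)^4 + 167772160000*m^10*t*(1-t)^3 + 251658240000*m^10*t^2*(1-t)^2 + 167772160000*m^10*t^3*(1-t) + 41943040000*m^10*t^4" using assms u by (intro add_nonneg_nonneg mult_nonneg_nonneg zero_le_power; simp)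
  then show ?thesis using e by simp
qed
lemma S_pos: fixes m t :: real assumes "0 \<le> m" "0 \<le> t" "t \<le> 1"
  shows "0 < Sr (20+m) (-(6/5)*t)"
proof -
  have e: "25 * Sr (20+m) (-(6/5)*t) = 146714208962400*t*(1-t) + 21087917803800*m*(1-t)^2 + 41662429925040*m*t*(1-t) + 20583207873432*m*t^2 + 2487742993075*m^2*(1-t)^2 + 4927416319910*m^2*t*(1-t) + 2440282744051*m^2*t^2 + 156462290450*m^3*(1-t)^2 + 310675510180*m^3*t*(1-t) + 154232186258*m^3*t^2 + 5533134600*m^4*(1-t)^2 + 11013684240*m^4*t*(1-t) + 5480770824*m^4*t^2 + 104320000*m^5*(1-t)^2 + 208148480*m^5*t*(1-t) + 103828480*m^5*t^2 + 819200*m^6*(1-t)^2 + 1638400*m^6*t*(1-t) + 819200*m^6*t^2 + 74453145678000*(1-t)^2 + 72307553811120*t^2"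
    unfolding Sr_def by algebra
  have u: "0 \<le> 1 - t" using assms by simp
  have "0 \<le> 146714208962400*t*(1-t) + 21087917803800*m*(1-t)^2 + 41662429925040*m*t*(1-t) + 20583207873432*m*t^2 + 2487742993075*m^2*(1-t)^2 + 4927416319910*m^2*t*(1-t) + 2440282744051*m^2*t^2 + 156462290450*m^3*(1-t)^2 + 310675510180*m^3*t*(1-t) + 154232186258*m^3*t^2 + 5533134600*m^4*(1-t)^2 + 11013684240*m^4*t*(1-t) + 5480770824*m^4*t^2 + 104320000*m^5*(1-t)^2 + 208148480*m^5*t*(1-t) + 103828480*m^5*t^2 + 819200*m^6*(1-t)^2 + 1638400*m^6*t*(1-t) + 819200*m^6*t^2" using assms u by (intro add_nonneg_nonneg mult_nonneg_nonneg zero_le_power; simp)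
  moreover have "74453145678000*(1-t)^2 + 72307553811120*t^2 > 0"
  proof -
    have a: "(1-t)^2 + t^2 = 2*(t-1/2)^2 + 1/2" by algebra
    have "(0::real) \<le> (t-1/2)^2" by simp
    then have "(1-t)^2 + t^2 > 0" using a by linarith
    moreover have "74453145678000*(1-t)^2 + 72307553811120*t^2 \<ge> 72307553811120*((1-t)^2 + t^2)"
    proof -
      have "(0::real) \<le> (1-t)^2" by simp
      then show ?thesis by (simp add: distrib_left)
    qed
    moreover have "72307553811120*((1-t)^2 + t^2) > 0" using calculation(1) by simp
    ultimately show ?thesis by linarith
  qed
  ultimately show ?thesis using e by simp
qed
lemma cov_pos: fixes m :: real assumes "0 \<le> m"
  shows "0 \<le> Cr (20+m) (-(6/5)) * Sr (20+m+1) 0 - Cr (20+m+1) 0 * Sr (20+m) (-(6/5))"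
proof -
  have e: "25 * (Cr (20+m) (-(6/5)) * Sr (20+m+1) 0 - Cr (20+m+1) 0 * Sr (20+m) (-(6/5))) = 60307170726864915122400 + 27900264683881096578000*m + 5807408000989232127606*m^2 + 716196058368998174012*m^3 + 57951810720989441510*m^4 + 3214829098151746224*m^5 + 123821164876883424*m^6 + 3269484408803328*m^7 + 56641184071680*m^8 + 581347311616*m^9 + 2684354560*m^10"
    unfolding Sr_def Cr_def by (simp only: mult_zero_right mult_zero_left power_zero_numeral add_0_right add_0_left diff_zero) algebra
  have "0 \<le> 60307170726864915122400 + 27900264683881096578000*m + 5807408000989232127606*m^2 + 716196058368998174012*m^3 + 57951810720989441510*m^4 + 3214829098151746224*m^5 + 123821164876883424*m^6 + 3269484408803328*m^7 + 56641184071680*m^8 + 581347311616*m^9 + 2684354560*m^10" using assms by (intro add_nonneg_nonneg mult_nonneg_nonneg zero_le_power; simp)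
  then show ?thesis using e by simp
qed

lemma tail_pos: fixes m :: real assumes "0 \<le> m"
  shows "0 \<le> Sr (20+m) 0 - (20+m) * (Sr (20+m) 0 - Cr (20+m) 0)"
proof -
  have e: "1 * (Sr (20+m) 0 - (20+m) * (Sr (20+m) 0 - Cr (20+m) 0)) = 1501124004720 + 424445113992*m + 49993481511*m^2 + 3139806995*m^3 + 110895620*m^4 + 2088448*m^5 + 16384*m^6"
    unfolding Sr_def Cr_def by (simp only: mult_zero_right mult_zero_left power_zero_numeral add_0_right add_0_left diff_zero) algebra
  have "0 \<le> 1501124004720 + 424445113992*m + 49993481511*m^2 + 3139806995*m^3 + 110895620*m^4 + 2088448*m^5 + 16384*m^6" using assms by (intro add_nonneg_nonneg mult_nonneg_nonneg zero_le_power; simp)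
  then show ?thesis using e by simp
qed

lemma fam_xf: assumes "n \<ge> 1"
  shows "Den (real n) * (\<Sum>k\<in>{-(int n+3)..int n+3}. (xf n b k)^2) = 16*cen (2*n)*Sr (real n) b"
    "Den (real n) * (\<Sum>k\<in>{-(int n+3)..int n+3}. xf n b k * xf n b (k+1)) = 16*cen (2*n)*Cr (real n) b"
    "Den (real n) * (\<Sum>k\<in>{-(int n+3)..int n+3}. (real_of_int k)^2 * (xf n b k)^2) = 16*cen (2*n)*Mr (real n) b"
proof -
  have e1: "(\<Sum>k\<in>{-(int n+3)..int n+3}. (xf n b k)^2) = (\<Sum>k\<in>{-(int n+3)..int n+3}. 1 * (((64 + 64*b + 16*real n) * bb n k + (-16*b - 8*real n) * bb (n+1) k + real n * bb (n+2) k) * ((64 + 64*b + 16*real n) * bb n k + (-16*b - 8*real n) * bb (n+1) k + real n * bb (n+2) k)))"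
    by (simp add: xf_def power2_eq_square)
  have e2: "(\<Sum>k\<in>{-(int n+3)..int n+3}. xf n b k * xf n b (k+1)) = (\<Sum>k\<in>{-(int n+3)..int n+3}. 1 * (((64 + 64*b + 16*real n) * bb n k + (-16*b - 8*real n) * bb (n+1) k + real n * bb (n+2) k) * ((64 + 64*b + 16*real n) * bb n (k+1) + (-16*b - 8*real n) * bb (n+1) (k+1) + real n * bb (n+2) (k+1))))"
    by (simp add: xf_def)
  have e3: "(\<Sum>k\<in>{-(int n+3)..int n+3}. (real_of_int k)^2 * (xf n b k)^2) = (\<Sum>k\<in>{-(int n+3)..int n+3}. (real_of_int k)^2 * (((64 + 64*b + 16*real n) * bb n k + (-16*b - 8*real n) * bb (n+1) k + real n * bb (n+2) k) * ((64 + 64*b + 16*real n) * bb n k + (-16*b - 8*real n) * bb (n+1) k + real n * bb (n+2) k)))"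
    by (simp add: xf_def power2_eq_square)
  show "Den (real n) * (\<Sum>k\<in>{-(int n+3)..int n+3}. (xf n b k)^2) = 16*cen (2*n)*Sr (real n) b"
    unfolding e1 bil3w using fam_all(1)[OF assms] .
  show "Den (real n) * (\<Sum>k\<in>{-(int n+3)..int n+3}. xf n b k * xf n b (k+1)) = 16*cen (2*n)*Cr (real n) b"
    unfolding e2 bil3w using fam_all(2)[OF assms] .
  show "Den (real n) * (\<Sum>k\<in>{-(int n+3)..int n+3}. (real_of_int k)^2 * (xf n b k)^2) = 16*cen (2*n)*Mr (real n) b"
    unfolding e3 bil3w using fam_all(3)[OF assms] .
qed

lemma bb_zero: "k \<notin> {-(int m)..int m} \<Longrightarrow> bb m k = 0"
  by (auto simp: bb_def binz_def)

lemma xf_supp: assumes "k \<notin> {-(int n+3)..int n+3}" shows "xf n b k = 0"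
proof -
  have "bb n k = 0" "bb (n+1) k = 0" "bb (n+2) k = 0" using assms by (auto intro!: bb_zero)
  then show ?thesis unfolding xf_def by simp
qed

lemma cen_pos: "cen q > 0" by (simp add: cen_def)

lemma Den_pos: "r \<ge> 1 \<Longrightarrow> Den r > 0" unfolding Den_def by (simp add: mult_pos_pos)

definition tf :: "real \<Rightarrow> real \<Rightarrow> real" where "tf r b = Cr r b / Sr r b"

lemma Sr_pos: assumes "r \<ge> 20" "-(6/5) \<le> b" "b \<le> 0" shows "Sr r b > 0"
proof -
  have "0 < Sr (20 + (r-20)) (-(6/5) * (-(5/6)*b))" by (rule S_pos) (use assms in auto)
  then show ?thesis by simp
qed

lemma Q_ineq: assumes "r \<ge> 20" "-(6/5) \<le> b" "b \<le> 0"
  shows "0 \<le> 2 * (Sr r b)^2 - (Sr r b - Cr r b) * (Sr r b + 16 * Mr r b)"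
proof -
  have "0 \<le> 2 * (Sr (20+(r-20)) (-(6/5)*(-(5/6)*b)))^2 - (Sr (20+(r-20)) (-(6/5)*(-(5/6)*b)) - Cr (20+(r-20)) (-(6/5)*(-(5/6)*b))) * (Sr (20+(r-20)) (-(6/5)*(-(5/6)*b)) + 16 * Mr (20+(r-20)) (-(6/5)*(-(5/6)*b)))"
    by (rule Q_pos) (use assms in auto)
  then show ?thesis by simp
qed

lemma cov_ineq: assumes "r \<ge> 20" shows "tf (r+1) 0 \<le> tf r (-(6/5))"
proof -
  have "0 \<le> Cr (20+(r-20)) (-(6/5)) * Sr (20+(r-20)+1) 0 - Cr (20+(r-20)+1) 0 * Sr (20+(r-20)) (-(6/5))"
    by (rule cov_pos) (use assms in auto)
  then have h: "Cr (r+1) 0 * Sr r (-(6/5)) \<le> Cr r (-(6/5)) * Sr (r+1) 0" by simp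
  have p1: "Sr r (-(6/5)) > 0" by (rule Sr_pos) (use assms in auto)
  have p2: "Sr (r+1) 0 > 0" by (rule Sr_pos) (use assms in auto)
  show ?thesis unfolding tf_def using h p1 p2 by (simp add: divide_simps mult.commute)
qed

lemma tail_ineq: assumes "r \<ge> 20" shows "1 - 1/r \<le> tf r 0"
proof -
  have "0 \<le> Sr (20+(r-20)) 0 - (20+(r-20)) * (Sr (20+(r-20)) 0 - Cr (20+(r-20)) 0)"
    by (rule tail_pos) (use assms in auto)
  then have h: "r * (Sr r 0 - Cr r 0) \<le> Sr r 0" by simp
  have p: "Sr r 0 > 0" by (rule Sr_pos) (use assms in auto)
  have r0: "r > 0" using assms by simp
  from h have "Sr r 0 - Cr r 0 \<le> Sr r 0 / r" using r0 by (simp add: field_simps mult.commute)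
  then have "1 - tf r 0 \<le> 1 / r" unfolding tf_def using p r0 by (simp add: field_simps)
  then show ?thesis by simp
qed

lemma ts_nonneg: "time_spread x \<ge> 0"
  unfolding time_spread_def by (rule infsum_nonneg) simp

lemma V_le: assumes "admissible s x" shows "V s \<le> time_spread x"
  unfolding V_def
proof (rule cInf_lower)
  show "time_spread x \<in> {time_spread x |x. admissible s x}" using assms by auto
  show "bdd_below {time_spread x |x. admissible s x}" by (rule bdd_belowI[where m=0]) (auto simp: ts_nonneg)
qed

lemma upper_one:
  assumes s: "0 < s" and tau_ge: "tf 20 0 \<le> 1 / sqrt (1 + s)"
  shows "V s \<le> (1/8) * (1 / (1 - 1 / sqrt (1 + s)) - 1/2)"
proof -
  define tau where "tau = 1 / sqrt (1 + s)"
  have t0: "0 < tau" and t1: "tau < 1" using s by (auto simp: tau_def)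
  define A where "A = {n::nat. 20 \<le> n \<and> tf (real n) 0 \<le> tau}"
  have A20: "20 \<in> A" using tau_ge by (simp add: A_def tau_def)
  define N where "N = nat \<lceil>1 / (1 - tau)\<rceil>"
  have AN: "A \<subseteq> {..N}"
  proof
    fix n assume "n \<in> A"
    then have n20: "20 \<le> n" and tn: "tf (real n) 0 \<le> tau" by (auto simp: A_def)
    have "1 - 1 / real n \<le> tau" using tail_ineq[of "real n"] n20 tn by simp
    then have "1 - tau \<le> 1 / real n" by simp
    moreover have "real n > 0" using n20 by simp
    ultimately have "real n * (1 - tau) \<le> 1" by (simp add: field_simps)
    then have "real n \<le> 1 / (1 - tau)" using t1 by (simp add: field_simps)
    then have "int n \<le> \<lceil>1 / (1 - tau)\<rceil>" by (metis ceiling_mono ceiling_of_nat)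
    then show "n \<in> {..N}" unfolding N_def by (simp add: le_nat_iff)
  qed
  have finA: "finite A" using AN finite_subset by blast
  define n where "n = Max A"
  have nA: "n \<in> A" unfolding n_def using finA A20 by (intro Max_in) auto
  have n20: "20 \<le> n" and tn: "tf (real n) 0 \<le> tau" using nA by (auto simp: A_def)
  have "Suc n \<notin> A" using finA unfolding n_def by (meson Max_ge Suc_n_not_le_n)
  then have tn1: "tau < tf (real n + 1) 0" using n20 by (auto simp: A_def add.commute)
  have cv: "tf (real n + 1) 0 \<le> tf (real n) (-(6/5))" by (rule cov_ineq) (use n20 in auto)
  have cont: "continuous_on {-(6/5)..0} (tf (real n))"
  proof -
    have "\<And>b. b \<in> {-(6/5)..0} \<Longrightarrow> Sr (real n) b \<noteq> 0"
      using Sr_pos[of "real n"] n20 by (auto simp: less_imp_neq[symmetric])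
    then show ?thesis unfolding tf_def
      by (intro continuous_intros) (auto simp: Cr_def Sr_def intro!: continuous_intros)
  qed
  obtain b where b: "-(6/5) \<le> b" "b \<le> 0" "tf (real n) b = tau"
    using IVT2'[of "tf (real n)" 0 tau "-(6/5)", OF tn _ _ cont] tn1 cv by auto
  have n1: "n \<ge> 1" using n20 by simp
  define x where "x = xf n b"
  define Sx where "Sx = (\<Sum>k\<in>{-(int n+3)..int n+3}. (x k)^2)"
  define Cx where "Cx = (\<Sum>k\<in>{-(int n+3)..int n+3}. x k * x (k+1))"
  define Mx where "Mx = (\<Sum>k\<in>{-(int n+3)..int n+3}. (real_of_int k)^2 * (x k)^2)"
  have hS: "Den (real n) * Sx = 16*cen (2*n)*Sr (real n) b" unfolding Sx_def x_def by (rule fam_xf(1)[OF n1])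
  have hC: "Den (real n) * Cx = 16*cen (2*n)*Cr (real n) b" unfolding Cx_def x_def by (rule fam_xf(2)[OF n1])
  have hM: "Den (real n) * Mx = 16*cen (2*n)*Mr (real n) b" unfolding Mx_def x_def by (rule fam_xf(3)[OF n1])
  have Dp: "Den (real n) > 0" by (rule Den_pos) (use n1 in simp)
  have cp: "cen (2*n) > 0" by (rule cen_pos)
  have Sp: "Sr (real n) b > 0" by (rule Sr_pos) (use n20 b in auto)
  have Sxp: "Sx > 0"
  proof -
    have "Den (real n) * Sx > 0" unfolding hS using cp Sp by simp
    then show ?thesis using Dp by (simp add: zero_less_mult_iff)
  qed
  have ratioC: "Cx / Sx = Cr (real n) b / Sr (real n) b"
  proof -
    have "Cx / Sx = (Den (real n) * Cx) / (Den (real n) * Sx)" using Dp by simp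
    also have "\<dots> = Cr (real n) b / Sr (real n) b" unfolding hS hC using cp by simp
    finally show ?thesis .
  qed
  have ratioM: "Mx / Sx = Mr (real n) b / Sr (real n) b"
  proof -
    have "Mx / Sx = (Den (real n) * Mx) / (Den (real n) * Sx)" using Dp by simp
    also have "\<dots> = Mr (real n) b / Sr (real n) b" unfolding hS hM using cp by simp
    finally show ?thesis .
  qed
  have supp: "\<And>k. k \<notin> {-(int n+3)..int n+3} \<Longrightarrow> x k = 0" unfolding x_def by (rule xf_supp)
  have tauC: "Cx / Sx = 1 / sqrt (1 + s)" using ratioC b(3) by (simp add: tf_def tau_def)
  have adm: "admissible s (\<lambda>k. x k / sqrt Sx)"
    using adm_of(1)[of "int n + 3" x s, OF supp] Sxp tauC unfolding Sx_def Cx_def by simp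
  have ts: "time_spread (\<lambda>k. x k / sqrt Sx) = Mr (real n) b / Sr (real n) b"
    using adm_of(2)[of "int n + 3" x s, OF supp] Sxp tauC ratioM unfolding Sx_def Cx_def Mx_def by simp
  have bound: "Mr (real n) b / Sr (real n) b \<le> (1/8) * (1 / (1 - tau) - 1/2)"
  proof -
    have Q: "0 \<le> 2 * (Sr (real n) b)^2 - (Sr (real n) b - Cr (real n) b) * (Sr (real n) b + 16 * Mr (real n) b)"
      by (rule Q_ineq) (use n20 b in auto)
    define S where "S = Sr (real n) b"
    define C where "C = Cr (real n) b"
    define M where "M = Mr (real n) b"
    have CS: "C = tau * S" using b(3) Sp unfolding tf_def C_def S_def by (simp add: field_simps)
    have S0: "S > 0" using Sp by (simp add: S_def)
    have Q': "(S - C) * (S + 16 * M) \<le> 2 * S^2" using Q unfolding S_def C_def M_def by simp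
    then have "S * (1 - tau) * (S + 16 * M) \<le> S * (2 * S)" unfolding CS by (simp add: algebra_simps power2_eq_square)
    then have "(1 - tau) * (S + 16 * M) \<le> 2 * S" using S0 by (simp add: mult.assoc mult_le_cancel_left_pos)
    then have "S + 16 * M \<le> 2 * S / (1 - tau)" using t1 by (simp add: field_simps)
    then have "M / S \<le> (1/8) * (1 / (1 - tau) - 1/2)" using S0 t1 by (simp add: field_simps)
    then show ?thesis unfolding S_def M_def .
  qed
  have "V s \<le> time_spread (\<lambda>k. x k / sqrt Sx)" by (rule V_le[OF adm])
  then show ?thesis using ts bound by (simp add: tau_def)
qed

theorem theorem3:
  shows "(\<forall>s::real. s > 0 \<longrightarrow> eta_p s \<ge> s * (1 - sqrt (s / (1 + s)))) \<and>
         (\<exists>s0::real. s0 > 0 \<and> (\<forall>s. 0 < s \<and> s \<le> s0 \<longrightarrow>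
            eta_p s \<le> s / 8 * (sqrt (1 + s) / (sqrt (1 + s) - 1) - 1 / 2)))"
proof
  show "\<forall>s::real. s > 0 \<longrightarrow> eta_p s \<ge> s * (1 - sqrt (s / (1 + s)))"
    using lower_part by blast
next
  define r0 where "r0 = tf 20 0"
  have r0v: "r0 = 2904275736000 / 2978125827120" unfolding r0_def tf_def by (simp add: Sr_def Cr_def)
  have r0p: "0 < r0" and r01: "r0 < 1" unfolding r0v by simp_all
  define s0 where "s0 = 1 / r0^2 - 1"
  have s0p: "s0 > 0" unfolding s0_def r0v by (simp add: power2_eq_square)
  have "\<forall>s. 0 < s \<and> s \<le> s0 \<longrightarrow> eta_p s \<le> s / 8 * (sqrt (1 + s) / (sqrt (1 + s) - 1) - 1 / 2)"
  proof (intro allI impI)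
    fix s :: real assume hs: "0 < s \<and> s \<le> s0"
    define R where "R = sqrt (1 + s)"
    have R1: "R > 1" unfolding R_def using hs by simp
    have "R \<le> sqrt (1 + s0)" unfolding R_def using hs by simp
    also have "sqrt (1 + s0) = 1 / r0" unfolding s0_def using r0p by (simp add: real_sqrt_divide)
    finally have "R \<le> 1 / r0" .
    then have "r0 \<le> 1 / R" using r0p R1 by (simp add: field_simps)
    then have tg: "tf 20 0 \<le> 1 / sqrt (1 + s)" unfolding r0_def R_def .
    have "V s \<le> (1/8) * (1 / (1 - 1 / sqrt (1 + s)) - 1/2)" by (rule upper_one) (use hs tg in auto)
    also have "1 / (1 - 1 / sqrt (1 + s)) = sqrt (1 + s) / (sqrt (1 + s) - 1)"
      using R1 unfolding R_def[symmetric] by (simp add: field_simps)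
    finally have "V s \<le> (1/8) * (sqrt (1 + s) / (sqrt (1 + s) - 1) - 1/2)" .
    then have "s * V s \<le> s * ((1/8) * (sqrt (1 + s) / (sqrt (1 + s) - 1) - 1/2))"
      using hs by (simp add: mult_left_mono)
    then show "eta_p s \<le> s / 8 * (sqrt (1 + s) / (sqrt (1 + s) - 1) - 1 / 2)"
      unfolding eta_p_def by simp
  qed
  then show "\<exists>s0::real. s0 > 0 \<and> (\<forall>s. 0 < s \<and> s \<le> s0 \<longrightarrow>
            eta_p s \<le> s / 8 * (sqrt (1 + s) / (sqrt (1 + s) - 1) - 1 / 2))" using s0p by blast
qed

end
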